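(* Let $\Phi\in\mathcal{C}^2(\mathbb{R}^d)$ have compact sublevel sets. Given $t>0$ and $K>0$ there exist constants $\alpha,\delta_X,\delta_V>0$ such that every solution $f$ of \[\partial_tf+v\cdot\nabla_xf-\nabla_x\Phi(x)\cdot\nabla_vf=\Big(\int_{\mathbb{R}^d}f(t,x,u)\,\mathrm{d}u\Big)\mathcal{M}(v)-f\] with initial datum $f_0\in\mathcal{P}(\mathbb{R}^d\times\mathbb{R}^d)$ supported in $B(0,K)\times B(0,K)$ satisfies \[f(t,x,v)\ge\alpha\,\mathbb{1}_{\{|x|<\delta_X\}}\mathbb{1}_{\{|v|<\delta_V\}}\] in the sense of measures.
   Context: $\mathcal{M}(v)=(2\pi)^{-d/2}e^{-|v|^2/2}$; solutions are measure-valued solutions given by the associated Markov semigroup; the right-hand side is $\alpha$ times Lebesgue measure on $\{|x|<\delta_X\}\times\{|v|<\delta_V\}$. *)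

theory Defs
  imports "HOL-Analysis.Analysis" "HOL-Probability.Probability"
begin

type_synonym 'n state = "(real^'n) \<times> (real^'n)"

definition C2 :: "(real^'n \<Rightarrow> real) \<Rightarrow> bool" where
  "C2 \<Phi> \<longleftrightarrow> (\<exists>G H. (\<forall>x. (\<Phi> has_derivative (\<lambda>h. G x \<bullet> h)) (at x))
      \<and> (\<forall>x. (G has_derivative blinfun_apply (H x)) (at x))
      \<and> continuous_on UNIV (H :: (real^'n) \<Rightarrow> ((real^'n) \<Rightarrow>\<^sub>L (real^'n))))"

definition grad :: "(real^'n \<Rightarrow> real) \<Rightarrow> real^'n \<Rightarrow> real^'n" where
  "grad \<Phi> x = (THE g. (\<Phi> has_derivative (\<lambda>h. g \<bullet> h)) (at x))"

definition ham_flow :: "(real^'n \<Rightarrow> real) \<Rightarrow> (real \<Rightarrow> 'n state \<Rightarrow> 'n state) \<Rightarrow> bool" where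
  "ham_flow \<Phi> F \<longleftrightarrow> (\<forall>z. F 0 z = z \<and>
      (\<forall>t. ((\<lambda>s. fst (F s z)) has_vector_derivative snd (F t z)) (at t)
         \<and> ((\<lambda>s. snd (F s z)) has_vector_derivative - grad \<Phi> (fst (F t z))) (at t)))"

definition maxwellian :: "(real^'n) measure" where
  "maxwellian = density lborel
     (\<lambda>v. ennreal ((2 * pi) powr (- real CARD('n) / 2) * exp (- (norm v)\<^sup>2 / 2)))"

text \<open>Measure-valued solution given by the Markov semigroup, expressed through the
  equivalent mild (Duhamel) formulation along the Hamiltonian flow:
  f_t = e^{-t} (F_t)_# f_0 + int_0^t e^{-(t-s)} (F_{t-s})_# (rho_s \<otimes> M) ds,
  where rho_s is the x-marginal of f_s.\<close>
definition kinetic_solution ::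
  "(real^'n \<Rightarrow> real) \<Rightarrow> 'n state measure \<Rightarrow> (real \<Rightarrow> 'n state measure) \<Rightarrow> bool" where
  "kinetic_solution \<Phi> f0 f \<longleftrightarrow>
     (\<exists>F. ham_flow \<Phi> F \<and>
       (\<forall>t\<ge>0. prob_space (f t) \<and> sets (f t) = sets borel) \<and>
       (\<forall>t\<ge>0. \<forall>A\<in>sets borel.
          set_integrable lborel {0..t}
            (\<lambda>s. exp (-(t - s)) * measure (distr (distr (f s) borel fst \<Otimes>\<^sub>M maxwellian) borel (F (t - s))) A)
        \<and> measure (f t) A = exp (-t) * measure (distr f0 borel (F t)) A
            + (\<integral>s\<in>{0..t}. exp (-(t - s)) *
                 measure (distr (distr (f s) borel fst \<Otimes>\<^sub>M maxwellian) borel (F (t - s))) A \<partial>lborel)))"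

end

theory Submission
  imports Defs
begin

lemma Lipschitz_image_bound_aux:
  fixes f :: "'M::euclidean_space \<Rightarrow> 'M"
  assumes "0 < B" "bounded S" "S \<in> sets lebesgue" "0 < e"
      and lips: "\<And>x y. x \<in> S \<Longrightarrow> y \<in> S \<Longrightarrow> norm(f y - f x) \<le> B * norm(y - x)"
  shows "\<exists>W\<in>lmeasurable. f ` S \<subseteq> W \<and>
           measure lebesgue W \<le> (2 * B * DIM('M)) ^ DIM('M) * (measure lebesgue S + e)"
proof -
  have "S \<in> lmeasurable"
    using assms by (simp add: bounded_set_imp_lmeasurable)
  obtain T where "open T" "S \<subseteq> T" "(T - S) \<in> lmeasurable"
                 "emeasure lebesgue (T - S) < ennreal e"
    using sets_lebesgue_outer_open [OF \<open>S \<in> sets lebesgue\<close> \<open>0 < e\<close>] by metis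
  then have mTS: "measure lebesgue (T - S) < e"
    by (metis emeasure_eq_measure2 ennreal_leI linorder_not_le)
  have Tm: "T \<in> lmeasurable"
    using \<open>S \<in> lmeasurable\<close> \<open>S \<subseteq> T\<close> \<open>T - S \<in> lmeasurable\<close> fmeasurable_Diff_D by blast
  have T: "measure lebesgue T \<le> measure lebesgue S + e"
  proof -
    have "measure lebesgue T = measure lebesgue S + measure lebesgue (T - S)"
      using measurable_measure_Diff[OF Tm _ \<open>S \<subseteq> T\<close>] \<open>S \<in> lmeasurable\<close> by auto
    then show ?thesis using mTS by linarith
  qed
  have "\<exists>r. 0 < r \<and> r \<le> 1/2 \<and>
            (x \<in> S \<longrightarrow> (\<forall>y. norm(y - x) < r
                       \<longrightarrow> y \<in> T \<and> (y \<in> S \<longrightarrow> norm(f y - f x) \<le> B * norm(y - x))))"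
        for x
  proof (cases "x \<in> S")
    case True
    have "x \<in> T"
      using \<open>S \<subseteq> T\<close> \<open>x \<in> S\<close> by auto
    then obtain \<epsilon> where "0 < \<epsilon>" "ball x \<epsilon> \<subseteq> T"
      by (metis \<open>open T\<close> openE)
    then show ?thesis
      by (rule_tac x="min (1/2) \<epsilon>" in exI) (simp add: lips True dist_norm norm_minus_commute subset_iff)
  next
    case False
    then show ?thesis
      by (rule_tac x="1/4" in exI) auto
  qed
  then obtain R where R12: "\<And>x. 0 < R x \<and> R x \<le> 1/2"
                and RT: "\<And>x y. \<lbrakk>x \<in> S; norm(y - x) < R x\<rbrakk> \<Longrightarrow> y \<in> T"
                and RB: "\<And>x y. \<lbrakk>x \<in> S; y \<in> S; norm(y - x) < R x\<rbrakk> \<Longrightarrow> norm(f y - f x) \<le> B * norm(y - x)"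
    by metis+
  then have gaugeR: "gauge (\<lambda>x. ball x (R x))"
    by (simp add: gauge_def)
  obtain c where c: "S \<subseteq> cbox (-c *\<^sub>R One) (c *\<^sub>R One)" "box (-c *\<^sub>R One:: 'M) (c *\<^sub>R One) \<noteq> {}"
  proof -
    obtain B where B: "\<And>x. x \<in> S \<Longrightarrow> norm x \<le> B"
      using \<open>bounded S\<close> bounded_iff by blast
    show ?thesis
    proof (rule_tac c = "abs B + 1" in that)
      show "S \<subseteq> cbox (- (\<bar>B\<bar> + 1) *\<^sub>R One) ((\<bar>B\<bar> + 1) *\<^sub>R One)"
        using norm_bound_Basis_le Basis_le_norm
        by (fastforce simp: mem_box dest!: B intro: order_trans)
      show "box (- (\<bar>B\<bar> + 1) *\<^sub>R One) ((\<bar>B\<bar> + 1) *\<^sub>R One) \<noteq> {}"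
        by (simp add: box_eq_empty(1))
    qed
  qed
  obtain \<D> where "countable \<D>"
     and Dsub: "\<Union>\<D> \<subseteq> cbox (-c *\<^sub>R One) (c *\<^sub>R One)"
     and cbox: "\<And>K. K \<in> \<D> \<Longrightarrow> interior K \<noteq> {} \<and> (\<exists>c d. K = cbox c d)"
     and pw:   "pairwise (\<lambda>A B. interior A \<inter> interior B = {}) \<D>"
     and Ksub: "\<And>K. K \<in> \<D> \<Longrightarrow> \<exists>x \<in> S \<inter> K. K \<subseteq> (\<lambda>x. ball x (R x)) x"
     and exN:  "\<And>u v. cbox u v \<in> \<D> \<Longrightarrow> \<exists>n. \<forall>i \<in> Basis. v \<bullet> i - u \<bullet> i = (2*c) / 2^n"
     and "S \<subseteq> \<Union>\<D>"
    using covering_lemma [OF c gaugeR]  by force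
  have "\<exists>u v z. K = cbox u v \<and> box u v \<noteq> {} \<and> z \<in> S \<and> z \<in> cbox u v \<and>
                cbox u v \<subseteq> ball z (R z)" if "K \<in> \<D>" for K
  proof -
    obtain u v where "K = cbox u v"
      using \<open>K \<in> \<D>\<close> cbox by blast
    with that show ?thesis
      by (metis Int_iff interior_cbox cbox Ksub)
  qed
  then obtain uf vf zf
    where uvz: "\<And>K. K \<in> \<D> \<Longrightarrow>
                K = cbox (uf K) (vf K) \<and> box (uf K) (vf K) \<noteq> {} \<and> zf K \<in> S \<and>
                zf K \<in> cbox (uf K) (vf K) \<and> cbox (uf K) (vf K) \<subseteq> ball (zf K) (R (zf K))"
    by metis
  define prj1 where "prj1 \<equiv> \<lambda>x::'M. x \<bullet> (SOME i. i \<in> Basis)"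
  define fbx where "fbx \<equiv> \<lambda>D. cbox (f(zf D) - (B * DIM('M) * (prj1(vf D - uf D))) *\<^sub>R One::'M)
                                    (f(zf D) + (B * DIM('M) * prj1(vf D - uf D)) *\<^sub>R One)"
  have vu_pos: "0 < prj1 (vf X - uf X)" if "X \<in> \<D>" for X
    using uvz [OF that] by (simp add: prj1_def box_ne_empty SOME_Basis inner_diff_left)
  have prj1_idem: "prj1 (vf X - uf X) = (vf X - uf X) \<bullet> i" if  "X \<in> \<D>" "i \<in> Basis" for X i
  proof -
    have "cbox (uf X) (vf X) \<in> \<D>"
      using uvz \<open>X \<in> \<D>\<close> by auto
    with exN obtain n where "\<And>i. i \<in> Basis \<Longrightarrow> vf X \<bullet> i - uf X \<bullet> i = (2*c) / 2^n"
      by blast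
    then show ?thesis
      by (simp add: \<open>i \<in> Basis\<close> SOME_Basis inner_diff prj1_def)
  qed
  have countbl: "countable (fbx ` \<D>)"
    using \<open>countable \<D>\<close> by blast
  define Cst where "Cst = (2 * B * real DIM('M)) ^ DIM('M)"
  have Cst0: "0 \<le> Cst" using \<open>0 < B\<close> by (simp add: Cst_def)
  have "(\<Sum>k\<in>fbx`\<D>'. measure lebesgue k) \<le> Cst * measure lebesgue T" if "\<D>' \<subseteq> \<D>" "finite \<D>'" for \<D>'
  proof -
    have BM_ge0: "0 \<le> B * (DIM('M) * prj1 (vf X - uf X))" if "X \<in> \<D>'" for X
      using \<open>0 < B\<close> \<open>\<D>' \<subseteq> \<D>\<close> that vu_pos by fastforce
    have "{} \<notin> \<D>'"
      using cbox \<open>\<D>' \<subseteq> \<D>\<close> interior_empty by blast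
    have "(\<Sum>k\<in>fbx`\<D>'. measure lebesgue k) \<le> sum (measure lebesgue o fbx) \<D>'"
      by (rule sum_image_le [OF \<open>finite \<D>'\<close>]) (force simp: fbx_def)
    also have "\<dots> \<le> (\<Sum>X\<in>\<D>'. Cst * measure lebesgue X)"
    proof (rule sum_mono)
      fix X assume "X \<in> \<D>'"
      then have "X \<in> \<D>" using \<open>\<D>' \<subseteq> \<D>\<close> by blast
      then have ufvf: "cbox (uf X) (vf X) = X"
        using uvz by blast
      have "prj1 (vf X - uf X) ^ DIM('M) = (\<Prod>i::'M \<in> Basis. prj1 (vf X - uf X))"
        by (rule prod_constant [symmetric])
      also have "\<dots> = (\<Prod>i\<in>Basis. vf X \<bullet> i - uf X \<bullet> i)"
        by (simp add: \<open>X \<in> \<D>\<close> inner_diff_left prj1_idem cong: prod.cong)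
      finally have prj1_eq: "prj1 (vf X - uf X) ^ DIM('M) = (\<Prod>i\<in>Basis. vf X \<bullet> i - uf X \<bullet> i)" .
      have 0: "0 \<le> prj1 (vf X - uf X)"
        using \<open>X \<in> \<D>\<close> prj1_def vu_pos by fastforce
      have "(measure lebesgue \<circ> fbx) X \<le> Cst * Henstock_Kurzweil_Integration.content (cbox (uf X) (vf X))"
        apply (simp add: Cst_def fbx_def content_cbox_cases algebra_simps BM_ge0 \<open>X \<in> \<D>'\<close> \<open>0 < B\<close> flip: prj1_eq)
        using 0 uvz \<open>X \<in> \<D>\<close>
        by (fastforce simp add: box_ne_empty power_mult_distrib)
      also have "\<dots> = Cst * measure lebesgue X"
        by (subst (3) ufvf[symmetric]) simp
      finally show "(measure lebesgue \<circ> fbx) X \<le> Cst * measure lebesgue X" .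
    qed
    also have "\<dots> = Cst * sum (measure lebesgue) \<D>'"
      by (simp add: sum_distrib_left)
    also have "\<dots> \<le> Cst * measure lebesgue T"
    proof -
      have "\<And>K. K \<in> \<D>' \<Longrightarrow> \<exists>a b. K = cbox a b"
        using cbox that by blast
      then have div: "\<D>' division_of \<Union>\<D>'"
        using pairwise_subset [OF pw \<open>\<D>' \<subseteq> \<D>\<close>] unfolding pairwise_def
        by (force simp: \<open>finite \<D>'\<close> \<open>{} \<notin> \<D>'\<close> division_of_def)
      have le_meaT: "measure lebesgue (\<Union>\<D>') \<le> measure lebesgue T"
      proof (rule measure_mono_fmeasurable)
        show "(\<Union>\<D>') \<in> sets lebesgue"
          using div lmeasurable_division by auto
        have "\<Union>\<D>' \<subseteq> \<Union>\<D>"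
          using \<open>\<D>' \<subseteq> \<D>\<close> by blast
        also have "... \<subseteq> T"
        proof (clarify)
          fix x D
          assume "x \<in> D" "D \<in> \<D>"
          show "x \<in> T"
            using Ksub [OF \<open>D \<in> \<D>\<close>]
            by (metis \<open>x \<in> D\<close> Int_iff dist_norm mem_ball norm_minus_commute subsetD RT)
        qed
        finally show "\<Union>\<D>' \<subseteq> T" .
        show "T \<in> lmeasurable"
          using Tm .
      qed
      have "sum (measure lebesgue) \<D>' = sum Henstock_Kurzweil_Integration.content \<D>'"
        using  \<open>\<D>' \<subseteq> \<D>\<close> cbox by (force intro: sum.cong)
      then have "Cst * sum (measure lebesgue) \<D>' = Cst * measure lebesgue (\<Union>\<D>')"
        using content_division [OF div] by auto
      also have "\<dots> \<le> Cst * measure lebesgue T"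
        using Cst0 by (intro mult_left_mono [OF le_meaT]) auto
      finally show ?thesis .
    qed
    finally show ?thesis .
  qed
  then have e2: "sum (measure lebesgue) \<G> \<le> Cst * measure lebesgue T" if "\<G> \<subseteq> fbx ` \<D>" "finite \<G>" for \<G>
    by (metis finite_subset_image that)
  show ?thesis
  proof (intro bexI conjI)
    have "\<exists>X\<in>\<D>. f y \<in> fbx X" if "y \<in> S" for y
    proof -
      obtain X where "y \<in> X" "X \<in> \<D>"
        using \<open>S \<subseteq> \<Union>\<D>\<close> \<open>y \<in> S\<close> by auto
      then have y: "y \<in> ball(zf X) (R(zf X))"
        using uvz by fastforce
      have conj_le_eq: "z - b \<le> y \<and> y \<le> z + b \<longleftrightarrow> abs(y - z) \<le> b" for z y b::real
        by auto
      have yin: "y \<in> cbox (uf X) (vf X)" and zin: "(zf X) \<in> cbox (uf X) (vf X)"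
        using uvz \<open>X \<in> \<D>\<close> \<open>y \<in> X\<close> by auto
      have "norm (y - zf X) \<le> (\<Sum>i\<in>Basis. \<bar>(y - zf X) \<bullet> i\<bar>)"
        by (rule norm_le_l1)
      also have "\<dots> \<le> real DIM('M) * prj1 (vf X - uf X)"
      proof (rule sum_bounded_above)
        fix j::'M assume j: "j \<in> Basis"
        show "\<bar>(y - zf X) \<bullet> j\<bar> \<le> prj1 (vf X - uf X)"
          using yin zin j
          by (fastforce simp add: mem_box prj1_idem [OF \<open>X \<in> \<D>\<close> j] inner_diff_left)
      qed
      finally have nole: "norm (y - zf X) \<le> DIM('M) * prj1 (vf X - uf X)"
        by simp
      have fle: "\<bar>f y \<bullet> i - f(zf X) \<bullet> i\<bar> \<le> B * DIM('M) * prj1 (vf X - uf X)" if "i \<in> Basis" for i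
      proof -
        have "\<bar>f y \<bullet> i - f (zf X) \<bullet> i\<bar> = \<bar>(f y - f (zf X)) \<bullet> i\<bar>"
          by (simp add: algebra_simps)
        also have "\<dots> \<le> norm (f y - f (zf X))"
          by (simp add: Basis_le_norm that)
        also have "\<dots> \<le> B * norm(y - zf X)"
          by (metis uvz RB \<open>X \<in> \<D>\<close> dist_commute dist_norm mem_ball \<open>y \<in> S\<close> y)
        also have "\<dots> \<le> B * real DIM('M) * prj1 (vf X - uf X)"
          using \<open>0 < B\<close> by (simp add: nole)
        finally show ?thesis .
      qed
      have fle': "\<bar>f y \<bullet> i - f(zf X) \<bullet> i\<bar> \<le> B * DIM('M) * (vf X \<bullet> i - uf X \<bullet> i)" if "i \<in> Basis" for i
        using fle[OF that] prj1_idem[OF \<open>X \<in> \<D>\<close> that] by (simp add: inner_diff_left)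
      show ?thesis
        by (rule_tac x=X in bexI)
           (auto simp: fbx_def prj1_idem mem_box conj_le_eq inner_add inner_diff fle' \<open>X \<in> \<D>\<close>)
    qed
    then show "f ` S \<subseteq> (\<Union>D\<in>\<D>. fbx D)" by auto
  next
    have 1: "\<And>D. D \<in> \<D> \<Longrightarrow> fbx D \<in> lmeasurable"
      by (auto simp: fbx_def)
    have 2: "I' \<subseteq> \<D> \<Longrightarrow> finite I' \<Longrightarrow> measure lebesgue (\<Union>D\<in>I'. fbx D) \<le> Cst * measure lebesgue T" for I'
      by (rule order_trans[OF measure_Union_le e2]) (auto simp: fbx_def)
    show "(\<Union>D\<in>\<D>. fbx D) \<in> lmeasurable"
      by (intro fmeasurable_UN_bound[OF \<open>countable \<D>\<close> 1 2])
    have "measure lebesgue (\<Union>D\<in>\<D>. fbx D) \<le> Cst * measure lebesgue T"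
      by (intro measure_UN_bound[OF \<open>countable \<D>\<close> 1 2])
    also have "\<dots> \<le> Cst * (measure lebesgue S + e)"
      using T Cst0 by (intro mult_left_mono) auto
    finally show "measure lebesgue (\<Union>D\<in>\<D>. fbx D) \<le> (2 * B * DIM('M)) ^ DIM('M) * (measure lebesgue S + e)"
      by (simp add: Cst_def)
  qed
qed

lemma Lipschitz_image_measure:
  fixes f :: "'M::euclidean_space \<Rightarrow> 'M"
  assumes "0 < B" "bounded S" "S \<in> sets lebesgue" "A \<in> sets lebesgue" "A \<subseteq> f ` S"
      and lips: "\<And>x y. x \<in> S \<Longrightarrow> y \<in> S \<Longrightarrow> norm(f y - f x) \<le> B * norm(y - x)"
  shows "measure lebesgue A \<le> (2 * B * DIM('M)) ^ DIM('M) * measure lebesgue S"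
proof (rule field_le_epsilon)
  fix e :: real assume "0 < e"
  define C where "C = (2 * B * real DIM('M)) ^ DIM('M)"
  have C0: "0 < C" using \<open>0 < B\<close> by (simp add: C_def)
  have "0 < e / C" using C0 \<open>0 < e\<close> by simp
  from Lipschitz_image_bound_aux[OF assms(1,2,3) this lips]
  obtain W where W: "W \<in> lmeasurable" "f ` S \<subseteq> W" "measure lebesgue W \<le> C * (measure lebesgue S + e / C)"
    by (auto simp: C_def)
  have "measure lebesgue A \<le> measure lebesgue W"
    using W assms(4,5) by (meson measure_mono_fmeasurable order_trans)
  also have "\<dots> \<le> C * measure lebesgue S + e"
  proof -
    have "C * (measure lebesgue S + e / C) = C * measure lebesgue S + e" using C0 by (simp add: field_simps)
    then show ?thesis using W(3) by linarith
  qed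
  finally show "measure lebesgue A \<le> (2 * B * DIM('M)) ^ DIM('M) * measure lebesgue S + e"
    by (simp add: C_def)
qed

lemma grad_eqI:
  assumes "\<And>x. (\<Phi> has_derivative (\<lambda>h. G x \<bullet> h)) (at x)"
  shows "grad \<Phi> x = G x"
  unfolding grad_def
proof (rule the_equality)
  show "(\<Phi> has_derivative (\<bullet>) (G x)) (at x)" using assms by (simp add: fun_eq_iff)
  fix g assume "(\<Phi> has_derivative (\<bullet>) g) (at x)"
  then have "(\<lambda>h. g \<bullet> h) = (\<lambda>h. G x \<bullet> h)"
    using has_derivative_unique assms by (metis (no_types, lifting) ext)
  then have "g \<bullet> (g - G x) = G x \<bullet> (g - G x)" by metis
  then have "(g - G x) \<bullet> (g - G x) = 0" by (simp add: inner_diff_left)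
  then show "g = G x" by simp
qed

lemma inner_self_deriv:
  fixes a :: "real \<Rightarrow> 'a::real_inner"
  assumes "(a has_vector_derivative a') (at t)"
  shows "((\<lambda>s. a s \<bullet> a s) has_real_derivative 2 * (a t \<bullet> a')) (at t)"
proof -
  have d: "(a has_derivative (\<lambda>h. h *\<^sub>R a')) (at t)"
    using assms by (simp add: has_vector_derivative_def)
  have "((\<lambda>s. a s \<bullet> a s) has_derivative (\<lambda>h. a t \<bullet> (h *\<^sub>R a') + (h *\<^sub>R a') \<bullet> a t)) (at t)"
    by (rule has_derivative_inner[OF d d])
  then show ?thesis
    unfolding has_field_derivative_def
    by (rule has_derivative_eq_rhs) (auto simp: fun_eq_iff inner_commute algebra_simps)
qed

lemma inner_deriv:
  fixes a b :: "real \<Rightarrow> 'a::real_inner"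
  assumes "(a has_vector_derivative a') (at t)" "(b has_vector_derivative b') (at t)"
  shows "((\<lambda>s. a s \<bullet> b s) has_real_derivative (a t \<bullet> b' + a' \<bullet> b t)) (at t)"
proof -
  have d: "(a has_derivative (\<lambda>h. h *\<^sub>R a')) (at t)" "(b has_derivative (\<lambda>h. h *\<^sub>R b')) (at t)"
    using assms by (simp_all add: has_vector_derivative_def)
  have "((\<lambda>s. a s \<bullet> b s) has_derivative (\<lambda>h. a t \<bullet> (h *\<^sub>R b') + (h *\<^sub>R a') \<bullet> b t)) (at t)"
    by (rule has_derivative_inner[OF d])
  then show ?thesis
    unfolding has_field_derivative_def
    by (rule has_derivative_eq_rhs) (auto simp: fun_eq_iff inner_commute algebra_simps)
qed

lemma mvt_vec:
  fixes \<phi> :: "real \<Rightarrow> 'a::real_normed_vector"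
  assumes "0 \<le> s" "\<And>u. u \<in> {0..s} \<Longrightarrow> (\<phi> has_vector_derivative \<phi>' u) (at u)"
    and "\<And>u. u \<in> {0..s} \<Longrightarrow> norm (\<phi>' u) \<le> M"
  shows "norm (\<phi> s - \<phi> 0) \<le> M * s"
proof -
  have "norm (\<phi> s - \<phi> 0) \<le> M * norm (s - 0)"
  proof (rule differentiable_bound[where S="{0..s}" and f' = "\<lambda>u h. h *\<^sub>R \<phi>' u"])
    show "convex {0..s}" by simp
    fix x assume x: "x \<in> {0..s}"
    show "(\<phi> has_derivative (\<lambda>h. h *\<^sub>R \<phi>' x)) (at x within {0..s})"
      using assms(2)[OF x] by (simp add: has_vector_derivative_def has_derivative_at_withinI)
    have "onorm (\<lambda>h. h *\<^sub>R \<phi>' x) = onorm (\<lambda>h::real. h) * norm (\<phi>' x)"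
      by (rule onorm_scaleR_left) simp
    also have "\<dots> = norm (\<phi>' x)" by (simp add: onorm_id)
    finally show "onorm (\<lambda>h. h *\<^sub>R \<phi>' x) \<le> M" using assms(3)[OF x] by simp
  qed (use assms in auto)
  then show ?thesis using assms by simp
qed

locale hflow =
  fixes \<Phi> :: "real^'n \<Rightarrow> real" and G :: "real^'n \<Rightarrow> real^'n" and F :: "real \<Rightarrow> 'n state \<Rightarrow> 'n state"
  assumes PhiD: "\<And>x. (\<Phi> has_derivative (\<lambda>h. G x \<bullet> h)) (at x)"
    and xD: "\<And>z t. ((\<lambda>s. fst (F s z)) has_vector_derivative snd (F t z)) (at t)"
    and vD: "\<And>z t. ((\<lambda>s. snd (F s z)) has_vector_derivative - G (fst (F t z))) (at t)"
    and F0: "\<And>z. F 0 z = z"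
begin

lemma energy:
  "norm (snd (F s z))^2 / 2 + \<Phi> (fst (F s z)) = norm (snd z)^2 / 2 + \<Phi> (fst z)"
proof -
  define e where "e u = (snd (F u z) \<bullet> snd (F u z)) / 2 + \<Phi> (fst (F u z))" for u
  have D: "(e has_derivative (\<lambda>h. 0)) (at u within UNIV)" for u
  proof -
    have d1: "((\<lambda>s. snd (F s z) \<bullet> snd (F s z)) has_real_derivative 2 * (snd (F u z) \<bullet> - G (fst (F u z)))) (at u)"
      by (rule inner_self_deriv[OF vD])
    have dx: "((\<lambda>s. fst (F s z)) has_derivative (\<lambda>h. h *\<^sub>R snd (F u z))) (at u)"
      using xD by (simp add: has_vector_derivative_def)
    have d2: "((\<lambda>s. \<Phi> (fst (F s z))) has_derivative (\<lambda>h. G (fst (F u z)) \<bullet> (h *\<^sub>R snd (F u z)))) (at u)"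
      using has_derivative_compose[OF dx PhiD] by simp
    have d1': "((\<lambda>s. snd (F s z) \<bullet> snd (F s z) / 2) has_derivative (*) (snd (F u z) \<bullet> - G (fst (F u z)))) (at u)"
      using DERIV_cdivide[OF d1, of 2] by (simp add: has_field_derivative_def)
    have "(e has_derivative (\<lambda>h. (snd (F u z) \<bullet> - G (fst (F u z))) * h + G (fst (F u z)) \<bullet> (h *\<^sub>R snd (F u z)))) (at u)"
      unfolding e_def
      by (rule has_derivative_add[OF d1' d2])
    then show ?thesis
      by (rule has_derivative_eq_rhs) (auto simp: fun_eq_iff inner_commute algebra_simps)
  qed
  obtain c where "\<forall>x\<in>UNIV. e x = c"
    using has_derivative_zero_constant[of UNIV e] D by auto
  then have "e s = e 0" by auto
  then show ?thesis by (simp add: e_def F0 power2_norm_eq_inner)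
qed

lemma vel_bound:
  assumes "\<And>x. m0 \<le> \<Phi> x"
  shows "norm (snd (F s z))^2 \<le> norm (snd z)^2 + 2 * (\<Phi> (fst z) - m0)"
  proof -
  have "norm (snd (F s z))^2 = norm (snd z)^2 + 2 * (\<Phi> (fst z) - \<Phi> (fst (F s z)))"
    using energy[of s z] by (simp add: field_simps)
  then show ?thesis using assms[of "fst (F s z)"] by simp
  qed

lemma pos_sublevel:
  assumes "\<And>x. m0 \<le> \<Phi> x"
  shows "\<Phi> (fst (F s z)) \<le> norm (snd z)^2 / 2 + \<Phi> (fst z)"
proof -
  have "0 \<le> norm (snd (F s z))^2 / 2" by simp
  then show ?thesis using energy[of s z] by linarith
qed

lemma disp:
  assumes "0 \<le> s" "\<And>u. u \<in> {0..s} \<Longrightarrow> norm (snd (F u z)) \<le> V"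
  shows "norm (fst (F s z) - fst z) \<le> V * s"
  using mvt_vec[of s "\<lambda>u. fst (F u z)" "\<lambda>u. snd (F u z)" V] assms xD by (simp add: F0)

lemma vdisp:
  assumes "0 \<le> s" "\<And>u. u \<in> {0..s} \<Longrightarrow> norm (G (fst (F u z))) \<le> Gm"
  shows "norm (snd (F s z) - snd z) \<le> Gm * s"
  using mvt_vec[of s "\<lambda>u. snd (F u z)" "\<lambda>u. - G (fst (F u z))" Gm] assms vD by (simp add: F0)

lemma xdisp2:
  assumes "0 \<le> s" "\<And>u. u \<in> {0..s} \<Longrightarrow> norm (G (fst (F u z))) \<le> Gm"
  shows "norm (fst (F s z) - fst z - s *\<^sub>R snd z) \<le> (Gm * s) * s"
proof -
  have "norm ((fst (F s z) - s *\<^sub>R snd z) - (fst (F 0 z) - 0 *\<^sub>R snd z)) \<le> (Gm * s) * s"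
  proof (rule mvt_vec[where \<phi>' = "\<lambda>u. snd (F u z) - snd z"])
    fix u assume u: "u \<in> {0..s}"
    have "((\<lambda>u. u *\<^sub>R snd z) has_vector_derivative snd z) (at u)"
      by (auto intro!: derivative_eq_intros)
    then show "((\<lambda>u. fst (F u z) - u *\<^sub>R snd z) has_vector_derivative snd (F u z) - snd z) (at u)"
      by (rule has_vector_derivative_diff[OF xD])
    have "norm (snd (F u z) - snd z) \<le> Gm * u"
      using vdisp[of u] u assms(2) by auto
    also have "\<dots> \<le> Gm * s"
    proof -
      have "norm (G (fst (F 0 z))) \<le> Gm" using assms(2)[of 0] assms(1) by auto
      then have "0 \<le> Gm" using norm_ge_zero[of "G (fst (F 0 z))"] by linarith
      then show ?thesis using u by (auto intro: mult_left_mono)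
    qed
    finally show "norm (snd (F u z) - snd z) \<le> Gm * s" .
  qed (use assms in auto)
  then show ?thesis by (simp add: F0 algebra_simps)
qed

lemma gronwall_lip:
  assumes "0 \<le> \<tau>" "0 \<le> L"
    and lip: "\<And>u. u \<in> {0..\<tau>} \<Longrightarrow>
       norm (G (fst (F u z1)) - G (fst (F u z2))) \<le> L * norm (fst (F u z1) - fst (F u z2))"
  shows "norm (F \<tau> z1 - F \<tau> z2) \<le> exp ((1 + L) * \<tau>) * norm (z1 - z2)"
proof -
  define dx where "dx s = fst (F s z1) - fst (F s z2)" for s
  define dv where "dv s = snd (F s z1) - snd (F s z2)" for s
  define q where "q s = dx s \<bullet> dx s + dv s \<bullet> dv s" for s
  define w where "w = (\<lambda>s. exp (- ((1 + L) * s)) * q s)" 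
  have dxD: "(dx has_vector_derivative dv u) (at u)" for u
    unfolding dx_def dv_def by (rule has_vector_derivative_diff[OF xD xD])
  have dvD: "(dv has_vector_derivative - (G (fst (F u z1)) - G (fst (F u z2)))) (at u)" for u
    unfolding dv_def using has_vector_derivative_diff[OF vD vD] by simp
  have qD: "(q has_real_derivative (2 * (dx u \<bullet> dv u) + 2 * (dv u \<bullet> - (G (fst (F u z1)) - G (fst (F u z2)))))) (at u)" for u
    unfolding q_def by (rule DERIV_add[OF inner_self_deriv[OF dxD] inner_self_deriv[OF dvD]])
  have qle: "2 * (dx u \<bullet> dv u) + 2 * (dv u \<bullet> - (G (fst (F u z1)) - G (fst (F u z2)))) \<le> (1 + L) * q u"
    if u: "u \<in> {0..\<tau>}" for u
  proof -
    have a: "2 * (dx u \<bullet> dv u) \<le> 2 * (norm (dx u) * norm (dv u))"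
      using norm_cauchy_schwarz[of "dx u" "dv u"] by auto
    have b: "2 * (dv u \<bullet> - (G (fst (F u z1)) - G (fst (F u z2)))) \<le> 2 * (norm (dv u) * (L * norm (dx u)))"
    proof -
      have "dv u \<bullet> - (G (fst (F u z1)) - G (fst (F u z2))) \<le> norm (dv u) * norm (G (fst (F u z1)) - G (fst (F u z2)))"
        using norm_cauchy_schwarz[of "dv u" "- (G (fst (F u z1)) - G (fst (F u z2)))"] by (simp only: norm_minus_cancel)
      also have "\<dots> \<le> norm (dv u) * (L * norm (dx u))"
        using lip[OF u] by (auto intro: mult_left_mono simp: dx_def)
      finally show ?thesis by simp
    qed
    have c: "2 * (norm (dx u) * norm (dv u)) \<le> norm (dx u)^2 + norm (dv u)^2"
      using sum_squares_bound[of "norm (dx u)" "norm (dv u)"] by (simp add: algebra_simps power2_eq_square)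
    have "q u = norm (dx u)^2 + norm (dv u)^2" by (simp add: q_def power2_norm_eq_inner)
    moreover have "2 * (norm (dv u) * (L * norm (dx u))) \<le> L * (norm (dx u)^2 + norm (dv u)^2)"
      using mult_left_mono[OF c \<open>0 \<le> L\<close>] by (simp add: algebra_simps)
    ultimately show ?thesis using a b c by (simp add: algebra_simps)
  qed
  have "w \<tau> \<le> w 0"
  proof (rule DERIV_nonpos_imp_nonincreasing[OF \<open>0 \<le> \<tau>\<close>])
    fix u assume u: "0 \<le> u" "u \<le> \<tau>"
    have "(w has_real_derivative exp (- ((1 + L) * u)) * (- (1 + L)) * q u + exp (- ((1 + L) * u)) *
        (2 * (dx u \<bullet> dv u) + 2 * (dv u \<bullet> - (G (fst (F u z1)) - G (fst (F u z2)))))) (at u)"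
    proof -
      have e: "((\<lambda>s. exp (- ((1 + L) * s))) has_real_derivative exp (- ((1 + L) * u)) * (- (1 + L))) (at u)"
        by (auto intro!: derivative_eq_intros)
      show ?thesis unfolding w_def using DERIV_mult[OF e qD] by (simp add: algebra_simps)
    qed
    moreover have "exp (- ((1 + L) * u)) * (- (1 + L)) * q u + exp (- ((1 + L) * u)) *
        (2 * (dx u \<bullet> dv u) + 2 * (dv u \<bullet> - (G (fst (F u z1)) - G (fst (F u z2))))) \<le> 0"
    proof -
      have "exp (- ((1 + L) * u)) * (2 * (dx u \<bullet> dv u) + 2 * (dv u \<bullet> - (G (fst (F u z1)) - G (fst (F u z2)))))
           \<le> exp (- ((1 + L) * u)) * ((1 + L) * q u)"
        using qle[of u] u by (intro mult_left_mono) auto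
      then show ?thesis by (simp add: algebra_simps)
    qed
    ultimately show "\<exists>y. (w has_real_derivative y) (at u) \<and> y \<le> 0" by blast
  qed
  then have h: "exp (- ((1 + L) * \<tau>)) * q \<tau> \<le> q 0"
    by (simp add: w_def)
  have "exp ((1 + L) * \<tau>) * (exp (- ((1 + L) * \<tau>)) * q \<tau>) \<le> exp ((1 + L) * \<tau>) * q 0"
    by (rule mult_left_mono[OF h]) simp
  then have "q \<tau> \<le> exp ((1 + L) * \<tau>) * q 0"
    by (simp add: mult.assoc[symmetric] exp_add[symmetric])
  moreover have "q s = norm (F s z1 - F s z2)^2" for s
    by (simp add: q_def dx_def dv_def norm_Pair power2_norm_eq_inner[symmetric] norm_prod_def)
  ultimately have "norm (F \<tau> z1 - F \<tau> z2)^2 \<le> exp ((1 + L) * \<tau>) * norm (z1 - z2)^2"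
    by (simp add: F0)
  also have "\<dots> \<le> (exp ((1 + L) * \<tau>) * norm (z1 - z2))^2"
  proof -
    have "1 \<le> exp ((1 + L) * \<tau>)" using assms by simp
    then have "exp ((1 + L) * \<tau>) \<le> exp ((1 + L) * \<tau>)^2" by (simp add: power2_eq_square)
    then show ?thesis by (simp add: power_mult_distrib mult_right_mono)
  qed
  finally show ?thesis
    by (rule power2_le_imp_le) simp
qed

end

context hflow begin

lemma traj_bound:
  assumes m0: "\<And>x. m0 \<le> \<Phi> x" and PM: "\<And>x. norm x \<le> a \<Longrightarrow> \<Phi> x \<le> PM"
    and z: "norm (fst z) \<le> a" "norm (snd z) \<le> b" and s: "0 \<le> s" "s \<le> T"
  shows "norm (snd (F s z)) \<le> sqrt (b^2 + 2 * (PM - m0))"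
    and "norm (fst (F s z)) \<le> a + T * sqrt (b^2 + 2 * (PM - m0))"
proof -
  have vb: "norm (snd (F u z)) \<le> sqrt (b^2 + 2 * (PM - m0))" for u
  proof (rule real_le_rsqrt)
    have "norm (snd z)^2 \<le> b^2" using z(2) by (simp add: power_mono)
    then show "norm (snd (F u z))^2 \<le> b^2 + 2 * (PM - m0)"
      using vel_bound[OF m0, of u z] PM[OF z(1)] by (smt (verit))
  qed
  then show "norm (snd (F s z)) \<le> sqrt (b^2 + 2 * (PM - m0))" .
  have "norm (fst (F s z) - fst z) \<le> sqrt (b^2 + 2 * (PM - m0)) * s"
    using disp[OF s(1)] vb by blast
  also have "\<dots> \<le> T * sqrt (b^2 + 2 * (PM - m0))"
  proof -
    have "0 \<le> sqrt (b^2 + 2 * (PM - m0))" using vb[of 0] norm_ge_zero[of "snd (F 0 z)"] by linarith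
    then show ?thesis using s by (simp add: mult.commute mult_right_mono)
  qed
  finally show "norm (fst (F s z)) \<le> a + T * sqrt (b^2 + 2 * (PM - m0))"
    using z(1) norm_triangle_sub[of "fst (F s z)" "fst z"] by linarith
qed

lemma flow_lip:
  assumes m0: "\<And>x. m0 \<le> \<Phi> x" and PM: "\<And>x. norm x \<le> a \<Longrightarrow> \<Phi> x \<le> PM"
    and T: "0 \<le> T" and L: "0 \<le> L"
    and GL: "\<And>x y. norm x \<le> a + T * sqrt (a^2 + 2 * (PM - m0)) \<Longrightarrow> norm y \<le> a + T * sqrt (a^2 + 2 * (PM - m0))
               \<Longrightarrow> norm (G x - G y) \<le> L * norm (x - y)"
    and z: "norm z1 \<le> a" "norm z2 \<le> a" and \<tau>: "0 \<le> \<tau>" "\<tau> \<le> T"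
  shows "norm (F \<tau> z1 - F \<tau> z2) \<le> exp ((1 + L) * T) * norm (z1 - z2)"
proof -
  have zz: "norm (fst z1) \<le> a" "norm (snd z1) \<le> a" "norm (fst z2) \<le> a" "norm (snd z2) \<le> a"
    using z norm_fst_le[of "fst z1" "snd z1"] norm_snd_le[of "snd z1" "fst z1"]
      norm_fst_le[of "fst z2" "snd z2"] norm_snd_le[of "snd z2" "fst z2"] by auto
  have "norm (F \<tau> z1 - F \<tau> z2) \<le> exp ((1 + L) * \<tau>) * norm (z1 - z2)"
  proof (rule gronwall_lip[OF \<tau>(1) L])
    fix u assume u: "u \<in> {0..\<tau>}"
    show "norm (G (fst (F u z1)) - G (fst (F u z2))) \<le> L * norm (fst (F u z1) - fst (F u z2))"
      by (rule GL; rule traj_bound(2)[OF m0 PM]) (use zz u \<tau> in auto)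
  qed
  also have "\<dots> \<le> exp ((1 + L) * T) * norm (z1 - z2)"
    using \<tau> L by (intro mult_right_mono) (auto intro!: mult_left_mono)
  finally show ?thesis .
qed

end

lemma isCont_lip:
  fixes f :: "'a::real_normed_vector \<Rightarrow> 'b::real_normed_vector"
  assumes "0 < r" "\<And>z. z \<in> ball z0 r \<Longrightarrow> norm (f z - f z0) \<le> C * norm (z - z0)"
  shows "isCont f z0"
  unfolding continuous_at_eps_delta
proof (intro allI impI)
  fix e :: real assume e: "0 < e"
  define d where "d = min r (e / (\<bar>C\<bar> + 1))"
  have d: "0 < d" using e assms by (simp add: d_def)
  show "\<exists>d>0. \<forall>x'. dist x' z0 < d \<longrightarrow> dist (f x') (f z0) < e"
  proof (intro exI conjI allI impI)
    fix x' assume x': "dist x' z0 < d"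
    then have "x' \<in> ball z0 r" by (simp add: d_def dist_commute)
    then have "dist (f x') (f z0) \<le> C * norm (x' - z0)" using assms(2) by (simp add: dist_norm)
    also have "\<dots> \<le> \<bar>C\<bar> * norm (x' - z0)" by (simp add: mult_right_mono)
    also have "\<dots> \<le> \<bar>C\<bar> * d" using x' by (simp add: dist_norm mult_left_mono)
    also have "\<dots> < e"
    proof -
      have "\<bar>C\<bar> * d \<le> \<bar>C\<bar> * (e / (\<bar>C\<bar> + 1))" unfolding d_def by (rule mult_left_mono) auto
      also have "\<dots> < e" using e by (simp add: field_simps)
      finally show ?thesis .
    qed
    finally show "dist (f x') (f z0) < e" .
  qed (use d in auto)
qed

context hflow begin

lemma flow_cont:
  assumes m0: "\<And>x. m0 \<le> \<Phi> x" and PM: "\<And>r. \<exists>M. \<forall>x. norm x \<le> r \<longrightarrow> \<Phi> x \<le> M"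
    and GL: "\<And>r. \<exists>L\<ge>0. \<forall>x y. norm x \<le> r \<longrightarrow> norm y \<le> r \<longrightarrow> norm (G x - G y) \<le> L * norm (x - y)"
    and \<tau>: "0 \<le> \<tau>"
  shows "continuous_on UNIV (F \<tau>)"
proof -
  have "isCont (F \<tau>) z0" for z0
  proof -
    define a where "a = norm z0 + 1"
    obtain M where M: "\<And>x. norm x \<le> a \<Longrightarrow> \<Phi> x \<le> M" using PM by blast
    obtain L where L: "0 \<le> L" "\<And>x y. norm x \<le> a + \<tau> * sqrt (a^2 + 2 * (M - m0)) \<Longrightarrow> norm y \<le> a + \<tau> * sqrt (a^2 + 2 * (M - m0))
               \<Longrightarrow> norm (G x - G y) \<le> L * norm (x - y)"
      using GL by blast
    show ?thesis
    proof (rule isCont_lip[of 1])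
      fix z assume "z \<in> ball z0 1"
      then have "norm z \<le> a" unfolding a_def using norm_triangle_sub[of z z0]
        by (auto simp: dist_norm norm_minus_commute)
      moreover have "norm z0 \<le> a" by (simp add: a_def)
      ultimately show "norm (F \<tau> z - F \<tau> z0) \<le> exp ((1 + L) * \<tau>) * norm (z - z0)"
        using flow_lip[OF m0 M \<tau> L(1) L(2)] \<tau> by blast
    qed simp
  qed
  then show ?thesis by (simp add: continuous_at_imp_continuous_on)
qed

lemma flow_meas:
  assumes m0: "\<And>x. m0 \<le> \<Phi> x" and PM: "\<And>r. \<exists>M. \<forall>x. norm x \<le> r \<longrightarrow> \<Phi> x \<le> M"
    and GL: "\<And>r. \<exists>L\<ge>0. \<forall>x y. norm x \<le> r \<longrightarrow> norm y \<le> r \<longrightarrow> norm (G x - G y) \<le> L * norm (x - y)"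
    and \<tau>: "0 \<le> \<tau>"
  shows "F \<tau> \<in> borel_measurable borel"
  using flow_cont[OF assms] by (simp add: borel_measurable_continuous_onI)

end


context hflow begin

lemma mid_step:
  assumes m0: "\<And>x. m0 \<le> \<Phi> x"
    and PM0: "\<And>x. norm x \<le> R0 \<Longrightarrow> \<Phi> x \<le> PM0" and R0: "0 \<le> R0"
    and Gm: "\<And>x. norm x \<le> 3*R0+4 \<Longrightarrow> norm (G x) \<le> Gm" "0 \<le> Gm"
    and L: "0 \<le> L" "\<And>x y. norm x \<le> 3*R0+4 \<Longrightarrow> norm y \<le> 3*R0+4 \<Longrightarrow> norm (G x - G y) \<le> L * norm (x - y)"
    and \<tau>0: "0 < \<tau>0" "\<tau>0^2 * Gm \<le> 1" "\<tau>0 * sqrt (2 * (PM0 - m0)) \<le> 1"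
    and \<tau>: "\<tau>0 / 2 \<le> \<tau>" "\<tau> \<le> \<tau>0" and y: "norm y \<le> R0"
    and contF: "continuous_on UNIV (F \<tau>)"
  shows "\<And>x. norm x \<le> 1 \<Longrightarrow> \<exists>w. norm w \<le> 2*(R0+1)/\<tau>0 + \<tau>0*Gm \<and> fst (F \<tau> (y,w)) = x"
    and "\<And>w1 w2. norm w1 \<le> 2*(R0+1)/\<tau>0 + \<tau>0*Gm \<Longrightarrow> norm w2 \<le> 2*(R0+1)/\<tau>0 + \<tau>0*Gm \<Longrightarrow>
          norm (fst (F \<tau> (y,w1)) - fst (F \<tau> (y,w2))) \<le> exp ((1 + L) * \<tau>0) * norm (w1 - w2)"
proof -
  define Wb where "Wb = 2*(R0+1)/\<tau>0 + \<tau>0*Gm"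
  have Wb0: "0 < Wb" using \<tau>0 R0 Gm by (simp add: Wb_def add_pos_nonneg)
  have \<tau>pos: "0 < \<tau>" using \<tau> \<tau>0 by linarith
  have D0: "0 \<le> PM0 - m0" using m0[of 0] PM0[of 0] R0 by simp
  have P: "norm (fst (F u (y,w))) \<le> 3*R0+4" if w: "norm w \<le> Wb" and u: "0 \<le> u" "u \<le> \<tau>0" for w u
  proof -
    have "norm (fst (F u (y,w))) \<le> R0 + \<tau>0 * sqrt (Wb^2 + 2 * (PM0 - m0))"
      by (rule traj_bound(2)[OF m0 PM0]) (use w u y in auto)
    also have "\<dots> \<le> R0 + \<tau>0 * (Wb + sqrt (2 * (PM0 - m0)))"
    proof -
      have "sqrt (Wb^2 + 2 * (PM0 - m0)) \<le> sqrt (Wb^2) + sqrt (2 * (PM0 - m0))"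
        by (rule sqrt_add_le_add_sqrt) (use D0 in auto)
      also have "sqrt (Wb^2) = Wb" using Wb0 by simp
      finally show ?thesis using \<tau>0 by (simp add: mult_left_mono)
    qed
    also have "\<dots> = R0 + 2*(R0+1) + \<tau>0^2 * Gm + \<tau>0 * sqrt (2 * (PM0 - m0))"
      using \<tau>0 by (simp add: Wb_def field_simps power2_eq_square)
    also have "\<dots> \<le> 3*R0+4" using \<tau>0 by (smt (verit))
    finally show ?thesis .
  qed
  have xd: "norm (fst (F \<tau> (y,w)) - y - \<tau> *\<^sub>R w) \<le> Gm * \<tau> * \<tau>" if w: "norm w \<le> Wb" for w
    using xdisp2[of \<tau> "(y,w)" Gm] \<tau>pos Gm(1) P[OF w] \<tau> by auto
  show "\<exists>w. norm w \<le> 2*(R0+1)/\<tau>0 + \<tau>0*Gm \<and> fst (F \<tau> (y,w)) = x" if x: "norm x \<le> 1" for x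
  proof -
    define f where "f w = (1/\<tau>) *\<^sub>R (x - y) - (1/\<tau>) *\<^sub>R (fst (F \<tau> (y,w)) - y - \<tau> *\<^sub>R w)" for w
    have cf: "continuous_on (cball 0 Wb) f"
    proof -
      have "continuous_on UNIV (\<lambda>w. fst (F \<tau> (y, w)))"
        by (intro continuous_on_compose2[OF contF] continuous_intros) auto
      then have c: "continuous_on (cball 0 Wb) (\<lambda>w. fst (F \<tau> (y, w)))"
        by (rule continuous_on_subset) auto
      define X where "X = (\<lambda>w. fst (F \<tau> (y, w)))"
      have c': "continuous_on (cball 0 Wb) X" using c by (simp add: X_def)
      have "f = (\<lambda>w. (1/\<tau>) *\<^sub>R (x - y) - (1/\<tau>) *\<^sub>R (X w - y - \<tau> *\<^sub>R w))"
        by (simp add: f_def X_def fun_eq_iff)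
      then show ?thesis by (simp only:) (intro continuous_intros c')
    qed
    have maps: "f \<in> cball 0 Wb \<rightarrow> cball 0 Wb"
    proof
      fix w assume "w \<in> cball (0::real^'n) Wb"
      then have w: "norm w \<le> Wb" by simp
      have "norm (f w) \<le> norm ((1/\<tau>) *\<^sub>R (x - y)) + norm ((1/\<tau>) *\<^sub>R (fst (F \<tau> (y,w)) - y - \<tau> *\<^sub>R w))"
        unfolding f_def by (rule norm_triangle_ineq4)
      also have "\<dots> = (1/\<tau>) * norm (x - y) + (1/\<tau>) * norm (fst (F \<tau> (y,w)) - y - \<tau> *\<^sub>R w)"
        using \<tau>pos by simp
      also have "\<dots> \<le> (1/\<tau>) * (1 + R0) + (1/\<tau>) * (Gm * \<tau> * \<tau>)"
      proof (intro add_mono mult_left_mono)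
        show "norm (x - y) \<le> 1 + R0" using x y norm_triangle_ineq4[of x y] by linarith
      qed (use xd[OF w] \<tau>pos in auto)
      also have "\<dots> = (1 + R0) / \<tau> + Gm * \<tau>" using \<tau>pos by (simp add: field_simps)
      also have "\<dots> \<le> Wb"
      proof -
        have "(1 + R0) / \<tau> \<le> (1 + R0) / (\<tau>0/2)"
          using \<tau> \<tau>0 R0 by (intro divide_left_mono) auto
        moreover have "Gm * \<tau> \<le> Gm * \<tau>0" using \<tau> Gm(2) by (simp add: mult_left_mono)
        ultimately show ?thesis by (simp add: Wb_def field_simps)
      qed
      finally show "f w \<in> cball 0 Wb" by simp
    qed
    obtain w where w: "w \<in> cball 0 Wb" "f w = w"
      using brouwer_ball[OF Wb0 cf maps] by blast
    have "\<tau> *\<^sub>R f w = \<tau> *\<^sub>R w" using w(2) by simp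
    then have "(x - y) - (fst (F \<tau> (y,w)) - y - \<tau> *\<^sub>R w) = \<tau> *\<^sub>R w"
      using \<tau>pos by (simp add: f_def scaleR_diff_right)
    then have "fst (F \<tau> (y,w)) = x" by (simp add: algebra_simps)
    then show ?thesis using w(1) by (auto simp: Wb_def)
  qed
  show "norm (fst (F \<tau> (y,w1)) - fst (F \<tau> (y,w2))) \<le> exp ((1 + L) * \<tau>0) * norm (w1 - w2)"
    if w: "norm w1 \<le> 2*(R0+1)/\<tau>0 + \<tau>0*Gm" "norm w2 \<le> 2*(R0+1)/\<tau>0 + \<tau>0*Gm" for w1 w2
  proof -
    have "norm (F \<tau> (y,w1) - F \<tau> (y,w2)) \<le> exp ((1 + L) * \<tau>) * norm ((y,w1) - (y,w2))"
    proof (rule gronwall_lip)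
      fix u assume u: "u \<in> {0..\<tau>}"
      show "norm (G (fst (F u (y, w1))) - G (fst (F u (y, w2)))) \<le> L * norm (fst (F u (y, w1)) - fst (F u (y, w2)))"
        by (rule L(2); rule P) (use u w \<tau> in \<open>auto simp: Wb_def\<close>)
    qed (use \<tau>pos L in auto)
    also have "\<dots> \<le> exp ((1 + L) * \<tau>0) * norm (w1 - w2)"
      using \<tau> L by (auto simp: norm_Pair intro!: mult_right_mono mult_left_mono)
    moreover have "norm (fst (F \<tau> (y,w1) - F \<tau> (y,w2))) \<le> norm (F \<tau> (y,w1) - F \<tau> (y,w2))"
      using norm_fst_le[of "fst (F \<tau> (y,w1) - F \<tau> (y,w2))" "snd (F \<tau> (y,w1) - F \<tau> (y,w2))"]
      by (simp only: prod.collapse)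
    ultimately show ?thesis by simp
  qed
qed

lemma final_step:
  assumes m0: "\<And>x. m0 \<le> \<Phi> x"
    and PM1: "\<And>x. norm x \<le> 1 \<Longrightarrow> \<Phi> x \<le> PM1"
    and Gm: "\<And>x. norm x \<le> 2 \<Longrightarrow> norm (G x) \<le> Gm" "0 \<le> Gm"
    and L: "0 \<le> L" "\<And>x y. norm x \<le> 2 \<Longrightarrow> norm y \<le> 2 \<Longrightarrow> norm (G x - G y) \<le> L * norm (x - y)"
    and \<tau>1: "0 \<le> \<tau>1" "\<tau>1 * sqrt (1 + 2 * (PM1 - m0)) \<le> 1" "\<tau>1 * (sqrt (1 + 2 * (PM1 - m0)) + Gm) \<le> 1/2"
    and \<tau>: "0 < \<tau>" "\<tau> \<le> \<tau>1"
    and contF: "continuous_on UNIV (F \<tau>)"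
  shows "\<And>a. norm a \<le> 1/2 \<Longrightarrow> \<exists>z. norm z \<le> 1 \<and> F \<tau> z = a"
    and "\<And>z1 z2. norm z1 \<le> 1 \<Longrightarrow> norm z2 \<le> 1 \<Longrightarrow>
          norm (F \<tau> z1 - F \<tau> z2) \<le> exp ((1 + L) * \<tau>1) * norm (z1 - z2)"
proof -
  define V2 where "V2 = sqrt (1 + 2 * (PM1 - m0))"
  have D0: "0 \<le> PM1 - m0" using m0[of 0] PM1[of 0] by simp
  have V20: "0 \<le> V2" using D0 by (simp add: V2_def)
  have zz: "norm (fst z) \<le> 1" "norm (snd z) \<le> 1" if "norm z \<le> 1" for z :: "'n state"
    using that norm_fst_le[of "fst z" "snd z"] norm_snd_le[of "snd z" "fst z"] by auto
  have P: "norm (fst (F u z)) \<le> 2" "norm (snd (F u z)) \<le> V2" if z: "norm z \<le> 1" and u: "0 \<le> u" "u \<le> \<tau>1" for z u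
  proof -
    have "norm (fst (F u z)) \<le> 1 + \<tau>1 * sqrt (1^2 + 2 * (PM1 - m0))"
      by (rule traj_bound(2)[OF m0 PM1]) (use zz[OF z] u in auto)
    then show "norm (fst (F u z)) \<le> 2" using \<tau>1 by simp
    have "norm (snd (F u z)) \<le> sqrt (1^2 + 2 * (PM1 - m0))"
      by (rule traj_bound(1)[OF m0 PM1]) (use zz[OF z] u in auto)
    then show "norm (snd (F u z)) \<le> V2" by (simp add: V2_def)
  qed
  show "\<exists>z. norm z \<le> 1 \<and> F \<tau> z = a" if a: "norm a \<le> 1/2" for a
  proof -
    define f where "f z = z - F \<tau> z + a" for z
    have cf: "continuous_on (cball 0 1) f"
      unfolding f_def by (intro continuous_intros continuous_on_subset[OF contF]) auto
    have maps: "f \<in> cball 0 1 \<rightarrow> cball 0 1"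
    proof
      fix z assume "z \<in> cball (0::'n state) 1"
      then have z: "norm z \<le> 1" by simp
      have "norm (fst (F \<tau> z) - fst z) \<le> V2 * \<tau>"
        using disp[of \<tau> z V2] P(2)[OF z] \<tau> by auto
      moreover have "norm (snd (F \<tau> z) - snd z) \<le> Gm * \<tau>"
        using vdisp[of \<tau> z Gm] Gm(1) P(1)[OF z] \<tau> by auto
      moreover have "F \<tau> z - z = (fst (F \<tau> z) - fst z, snd (F \<tau> z) - snd z)" by (simp add: prod_eq_iff)
      ultimately have "norm (F \<tau> z - z) \<le> V2 * \<tau> + Gm * \<tau>"
        using norm_Pair_le[of "fst (F \<tau> z) - fst z" "snd (F \<tau> z) - snd z"] by simp
      also have "\<dots> \<le> 1/2"
      proof -
        have "(V2 + Gm) * \<tau> \<le> (V2 + Gm) * \<tau>1" using \<tau> V20 Gm(2) by (intro mult_left_mono) auto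
        then show ?thesis using \<tau>1(3) by (simp add: V2_def algebra_simps)
      qed
      finally have "norm (z - F \<tau> z) \<le> 1/2" by (simp add: norm_minus_commute)
      then have "norm (f z) \<le> 1" unfolding f_def using a norm_triangle_ineq[of "z - F \<tau> z" a] by linarith
      then show "f z \<in> cball 0 1" by simp
    qed
    obtain z where "z \<in> cball 0 1" "f z = z"
      using brouwer_ball[OF _ cf maps] by auto
    then have "norm z \<le> 1" "F \<tau> z = a" by (auto simp: f_def algebra_simps)
    then show ?thesis by blast
  qed
  show "norm (F \<tau> z1 - F \<tau> z2) \<le> exp ((1 + L) * \<tau>1) * norm (z1 - z2)"
    if "norm z1 \<le> 1" "norm z2 \<le> 1" for z1 z2
  proof (rule flow_lip[OF m0 PM1 \<tau>1(1) L(1)])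
    fix x y :: "real^'n"
    assume "norm x \<le> 1 + \<tau>1 * sqrt (1^2 + 2 * (PM1 - m0))" "norm y \<le> 1 + \<tau>1 * sqrt (1^2 + 2 * (PM1 - m0))"
    then show "norm (G x - G y) \<le> L * norm (x - y)" using \<tau>1 by (intro L(2)) auto
  qed (use that \<tau> in auto)
qed

end

lemma set_integral_lower:
  fixes g :: "real \<Rightarrow> real"
  assumes int: "set_integrable lborel {0..t} g" and nn: "\<And>s. s \<in> {0..t} \<Longrightarrow> 0 \<le> g s"
    and lb: "\<And>s. s \<in> {a..b} \<Longrightarrow> c \<le> g s" and ab: "0 \<le> a" "a \<le> b" "b \<le> t" and c: "0 \<le> c"
  shows "c * (b - a) \<le> (\<integral>s\<in>{0..t}. g s \<partial>lborel)"
proof -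
  have I: "integrable lborel (\<lambda>s. indicator {0..t} s *\<^sub>R g s)"
    using int by (simp add: set_integrable_def)
  have N: "AE s in lborel. 0 \<le> indicator {0..t} s *\<^sub>R g s"
    using nn by (auto simp: indicator_def)
  have "ennreal (c * (b - a)) = (\<integral>\<^sup>+ s. ennreal c * indicator {a..b} s \<partial>lborel)"
    using ab c by (simp add: nn_integral_cmult_indicator ennreal_mult)
  also have "\<dots> \<le> (\<integral>\<^sup>+ s. ennreal (indicator {0..t} s *\<^sub>R g s) \<partial>lborel)"
  proof (rule nn_integral_mono)
    fix s :: real
    show "ennreal c * indicator {a..b} s \<le> ennreal (indicator {0..t} s *\<^sub>R g s)"
    proof (cases "s \<in> {a..b}")
      case True
      then have "s \<in> {0..t}" using ab by auto
      then show ?thesis using True lb[OF True] by (simp add: indicator_def ennreal_leI)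
    next
      case False
      then show ?thesis by (auto simp: indicator_def)
    qed
  qed
  also have "\<dots> = ennreal (\<integral>s. indicator {0..t} s *\<^sub>R g s \<partial>lborel)"
    by (rule nn_integral_eq_integral[OF I N])
  finally have "ennreal (c * (b - a)) \<le> ennreal (\<integral>s. indicator {0..t} s *\<^sub>R g s \<partial>lborel)" .
  moreover have "0 \<le> (\<integral>s. indicator {0..t} s *\<^sub>R g s \<partial>lborel)"
    using N by (rule integral_nonneg_AE)
  ultimately show ?thesis
    by (simp add: set_lebesgue_integral_def ennreal_le_iff)
qed

lemma set_integral_nonneg_simple:
  fixes g :: "real \<Rightarrow> real"
  assumes nn: "\<And>s. s \<in> {0..t} \<Longrightarrow> 0 \<le> g s"
  shows "0 \<le> (\<integral>s\<in>{0..t}. g s \<partial>lborel)"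
  unfolding set_lebesgue_integral_def
  by (rule integral_nonneg_AE) (use nn in \<open>auto simp: indicator_def\<close>)

lemma sets_maxwellian[simp]: "sets (maxwellian :: (real^'n) measure) = sets borel"
  by (simp add: maxwellian_def)

lemma sigma_finite_maxwellian: "sigma_finite_measure (maxwellian :: (real^'n) measure)"
  unfolding maxwellian_def
  by (subst sigma_finite_measure.sigma_finite_iff_density_finite[OF sigma_finite_lborel]) auto

lemma maxwellian_lower:
  assumes B: "B \<in> sets borel" and r: "0 \<le> r"
  shows "ennreal ((2 * pi) powr (- real CARD('n) / 2) * exp (- (r^2) / 2)) * emeasure lborel (B \<inter> cball (0::real^'n) r)
          \<le> emeasure (maxwellian :: (real^'n) measure) B"
proof -
  let ?m = "(2 * pi) powr (- real CARD('n) / 2) * exp (- (r^2) / 2)"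
  let ?d = "\<lambda>v::real^'n. ennreal ((2 * pi) powr (- real CARD('n) / 2) * exp (- (norm v)\<^sup>2 / 2))"
  have "ennreal ?m * emeasure lborel (B \<inter> cball 0 r) = (\<integral>\<^sup>+ v. ennreal ?m * indicator (B \<inter> cball 0 r) v \<partial>lborel)"
    using B by (simp add: nn_integral_cmult_indicator)
  also have "\<dots> \<le> (\<integral>\<^sup>+ v. ?d v * indicator B v \<partial>lborel)"
  proof (rule nn_integral_mono)
    fix v :: "real^'n"
    show "ennreal ?m * indicator (B \<inter> cball 0 r) v \<le> ?d v * indicator B v"
    proof (cases "v \<in> B \<inter> cball 0 r")
      case True
      then have "norm v \<le> r" by simp
      then have "(norm v)^2 \<le> r^2" by (simp add: power_mono)
      then have "?m \<le> (2 * pi) powr (- real CARD('n) / 2) * exp (- (norm v)\<^sup>2 / 2)"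
        by (intro mult_left_mono) auto
      then show ?thesis using True by (simp add: indicator_def)
    qed (simp add: indicator_def)
  qed
  also have "\<dots> = emeasure maxwellian B"
    unfolding maxwellian_def using B by (subst emeasure_density) auto
  finally show ?thesis .
qed

lemma le_measureI_sets:
  assumes "sets M = sets N" "\<And>A. A \<in> sets M \<Longrightarrow> emeasure M A \<le> emeasure N A"
  shows "M \<le> N"
proof -
  have "space M = space N" using assms(1) by (rule sets_eq_imp_space_eq)
  moreover have "emeasure M A \<le> emeasure N A" for A
    by (cases "A \<in> sets M") (auto simp: assms emeasure_notin_sets)
  ultimately show ?thesis using assms(1) by (simp add: le_measure_iff le_fun_def)
qed

lemma pair_measure_mono:
  assumes "sets N' = sets N" "N' \<le> N" "sets M' = sets M" "M' \<le> M"
    and "sigma_finite_measure M" "sigma_finite_measure M'"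
    and X: "X \<in> sets (N \<Otimes>\<^sub>M M)"
  shows "emeasure (N' \<Otimes>\<^sub>M M') X \<le> emeasure (N \<Otimes>\<^sub>M M) X"
proof -
  interpret M: sigma_finite_measure M by fact
  interpret M': sigma_finite_measure M' by fact
  have X': "X \<in> sets (N' \<Otimes>\<^sub>M M')" using X assms(1,3) by (metis sets_pair_measure_cong)
  have "emeasure (N' \<Otimes>\<^sub>M M') X = (\<integral>\<^sup>+ x. \<integral>\<^sup>+ y. indicator X (x, y) \<partial>M' \<partial>N')"
    by (rule M'.emeasure_pair_measure[OF X'])
  also have "\<dots> \<le> (\<integral>\<^sup>+ x. \<integral>\<^sup>+ y. indicator X (x, y) \<partial>M \<partial>N')"
    by (intro nn_integral_mono nn_integral_mono_measure assms)
  also have "\<dots> \<le> (\<integral>\<^sup>+ x. \<integral>\<^sup>+ y. indicator X (x, y) \<partial>M \<partial>N)"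
    by (intro nn_integral_mono_measure assms)
  also have "\<dots> = emeasure (N \<Otimes>\<^sub>M M) X"
    by (rule M.emeasure_pair_measure[OF X, symmetric])
  finally show ?thesis .
qed

lemma density_box_lower:
  fixes c1 c2 :: real
  assumes c: "0 \<le> c1" "0 \<le> c2" and X: "X \<in> sets borel"
  shows "ennreal (c1 * c2) * emeasure lborel (X \<inter> cball (0 :: 'a::euclidean_space \<times> 'b::euclidean_space) 1)
    \<le> emeasure (density lborel (\<lambda>x::'a. ennreal c1 * indicator (cball 0 1) x) \<Otimes>\<^sub>M
                density lborel (\<lambda>v::'b. ennreal c2 * indicator (cball 0 1) v)) X"
proof -
  have sf: "sigma_finite_measure (density lborel (\<lambda>v::'b. ennreal c2 * indicator (cball 0 1) v))"
    by (subst sigma_finite_measure.sigma_finite_iff_density_finite[OF sigma_finite_lborel]) (auto simp: indicator_def)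
  have eq: "density lborel (\<lambda>x::'a. ennreal c1 * indicator (cball 0 1) x) \<Otimes>\<^sub>M
                density lborel (\<lambda>v::'b. ennreal c2 * indicator (cball 0 1) v)
     = density (lborel \<Otimes>\<^sub>M lborel) (\<lambda>(x,v). (ennreal c1 * indicator (cball 0 1) x) * (ennreal c2 * indicator (cball 0 1) v))"
  proof (rule pair_measure_density)
    have [measurable]: "cball (0::'a) 1 \<in> sets borel" "cball (0::'b) 1 \<in> sets borel" by auto
    show "(\<lambda>x::'a. ennreal c1 * indicator (cball 0 1) x) \<in> borel_measurable lborel" by measurable
    show "(\<lambda>x::'b. ennreal c2 * indicator (cball 0 1) x) \<in> borel_measurable lborel" by measurable
  qed (auto intro: sf sigma_finite_lborel)
  have "ennreal (c1 * c2) * emeasure lborel (X \<inter> cball 0 1) = (\<integral>\<^sup>+ z. ennreal (c1 * c2) * indicator (X \<inter> cball 0 1) z \<partial>lborel)"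
    using X by (simp add: nn_integral_cmult_indicator)
  also have "\<dots> \<le> (\<integral>\<^sup>+ z. (\<lambda>(x,v). (ennreal c1 * indicator (cball (0::'a) 1) x) * (ennreal c2 * indicator (cball (0::'b) 1) v)) z * indicator X z \<partial>lborel)"
  proof (rule nn_integral_mono)
    fix z :: "'a \<times> 'b"
    obtain x v where z: "z = (x, v)" by (cases z)
    show "ennreal (c1 * c2) * indicator (X \<inter> cball 0 1) z \<le> (\<lambda>(x,v). (ennreal c1 * indicator (cball (0::'a) 1) x) * (ennreal c2 * indicator (cball (0::'b) 1) v)) z * indicator X z"
    proof (cases "z \<in> X \<inter> cball 0 1")
      case True
      then have "norm (x, v) \<le> 1" by (simp add: z)
      then have "norm x \<le> 1" "norm v \<le> 1"
        using norm_fst_le[of x v] norm_snd_le[of v x] by auto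
      then show ?thesis using True c by (simp add: z indicator_def ennreal_mult)
    qed (simp add: indicator_def)
  qed
  also have "\<dots> = emeasure (density lborel (\<lambda>(x,v). (ennreal c1 * indicator (cball (0::'a) 1) x) * (ennreal c2 * indicator (cball (0::'b) 1) v))) X"
  proof -
    have [measurable]: "cball (0::'a) 1 \<in> sets borel" "cball (0::'b) 1 \<in> sets borel" by auto
    have cl[measurable]: "cball (0::'a) 1 \<times> cball (0::'b) 1 \<in> sets (lborel::('a\<times>'b) measure)"
      by (simp add: borel_closed closed_Times)
    have fe: "(\<lambda>(x,v). (ennreal c1 * indicator (cball (0::'a) 1) x) * (ennreal c2 * indicator (cball (0::'b) 1) v))
       = (\<lambda>z. ennreal (c1 * c2) * indicator (cball (0::'a) 1 \<times> cball (0::'b) 1) z)"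
      using c by (auto simp: fun_eq_iff indicator_def ennreal_mult)
    have mf: "(\<lambda>(x,v). (ennreal c1 * indicator (cball (0::'a) 1) x) * (ennreal c2 * indicator (cball (0::'b) 1) v)) \<in> borel_measurable (lborel::('a\<times>'b) measure)"
      unfolding fe by measurable
    show ?thesis using emeasure_density[OF mf, of X] X by simp
  qed
  finally show ?thesis by (simp add: eq lborel_prod)
qed

lemma measure_geI:
  assumes "ennreal c \<le> emeasure M X" "emeasure M X < \<infinity>" "0 \<le> c"
  shows "c \<le> measure M X"
proof -
  have "emeasure M X = ennreal (measure M X)"
    using assms(2) by (simp add: emeasure_eq_ennreal_measure)
  then show ?thesis using assms by (simp add: ennreal_le_iff)
qed

lemma emeasure_density_const_ind:
  fixes S :: "'a::euclidean_space set"
  assumes "S \<in> sets borel" "B \<in> sets borel"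
  shows "emeasure (density lborel (\<lambda>x. ennreal c * indicator S x)) B = ennreal c * emeasure lborel (B \<inter> S)"
proof -
  have [measurable]: "S \<in> sets borel" using assms by simp
  have "emeasure (density lborel (\<lambda>x. ennreal c * indicator S x)) B = (\<integral>\<^sup>+ x. ennreal c * indicator S x * indicator B x \<partial>lborel)"
    using assms by (subst emeasure_density) auto
  also have "\<dots> = (\<integral>\<^sup>+ x. ennreal c * indicator (B \<inter> S) x \<partial>lborel)"
    by (intro nn_integral_cong) (auto simp: indicator_def)
  also have "\<dots> = ennreal c * emeasure lborel (B \<inter> S)"
    using assms by (simp add: nn_integral_cmult_indicator)
  finally show ?thesis .
qed

lemma cont_of_deriv:
  assumes "\<And>x. (f has_derivative f' x) (at x)"
  shows "continuous_on UNIV f"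
  using assms has_derivative_continuous by (blast intro: continuous_at_imp_continuous_on)

lemma bdd_above_on_ball:
  fixes f :: "'a::euclidean_space \<Rightarrow> real"
  assumes "continuous_on UNIV f"
  shows "\<exists>M. \<forall>x. norm x \<le> r \<longrightarrow> f x \<le> M"
proof -
  have "compact (f ` cball 0 r)"
    by (rule compact_continuous_image[OF continuous_on_subset[OF assms]]) auto
  then obtain B where "\<forall>y\<in>f ` cball 0 r. norm y \<le> B"
    using compact_imp_bounded bounded_iff by metis
  then have "\<forall>x. norm x \<le> r \<longrightarrow> f x \<le> B" by (auto dest: abs_le_D1)
  then show ?thesis by blast
qed

lemma norm_bdd_on_ball:
  fixes f :: "'a::euclidean_space \<Rightarrow> 'b::real_normed_vector"
  assumes "continuous_on UNIV f"
  shows "\<exists>M\<ge>0. \<forall>x. norm x \<le> r \<longrightarrow> norm (f x) \<le> M"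
proof -
  have "compact (f ` cball 0 r)"
    by (rule compact_continuous_image[OF continuous_on_subset[OF assms]]) auto
  then obtain B where "\<forall>y\<in>f ` cball 0 r. norm y \<le> B"
    using compact_imp_bounded bounded_iff by metis
  then show ?thesis by (intro exI[of _ "max B 0"]) (auto intro: le_max_iff_disj[THEN iffD2])
qed

lemma lip_on_ball:
  fixes G :: "'a::euclidean_space \<Rightarrow> 'a"
  assumes GD: "\<And>x. (G has_derivative blinfun_apply (H x)) (at x)" and Hc: "continuous_on UNIV H"
  shows "\<exists>L\<ge>0. \<forall>x y. norm x \<le> r \<longrightarrow> norm y \<le> r \<longrightarrow> norm (G x - G y) \<le> L * norm (x - y)"
proof -
  obtain B where B: "B \<ge> 0" "\<And>x. norm x \<le> r \<Longrightarrow> norm (H x) \<le> B"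
    using norm_bdd_on_ball[OF Hc, of r] by blast
  have "norm (G x - G y) \<le> B * norm (x - y)" if "norm x \<le> r" "norm y \<le> r" for x y
  proof (rule differentiable_bound[where S = "cball 0 r" and f' = "\<lambda>x. blinfun_apply (H x)"])
    show "convex (cball (0::'a) r)" by simp
    fix z assume "z \<in> cball (0::'a) r"
    then show "(G has_derivative blinfun_apply (H z)) (at z within cball 0 r)"
      "onorm (blinfun_apply (H z)) \<le> B"
      using GD[of z] B(2)[of z] by (auto simp: has_derivative_at_withinI norm_blinfun.rep_eq[symmetric])
  qed (use that in auto)
  then show ?thesis using B(1) by blast
qed

lemma Phi_lower:
  fixes \<Phi> :: "'a::euclidean_space \<Rightarrow> real"
  assumes c: "continuous_on UNIV \<Phi>" and cs: "\<forall>c. compact {x. \<Phi> x \<le> c}"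
  shows "\<exists>m. \<forall>x. m \<le> \<Phi> x"
proof -
  let ?S = "{x. \<Phi> x \<le> \<Phi> 0}"
  have "compact ?S" "?S \<noteq> {}" using cs by auto
  then obtain x0 where x0: "x0 \<in> ?S" "\<And>y. y \<in> ?S \<Longrightarrow> \<Phi> x0 \<le> \<Phi> y"
    using continuous_attains_inf[OF _ _ continuous_on_subset[OF c]] by (metis subset_UNIV)
  show ?thesis
  proof (intro exI allI)
    fix x show "\<Phi> x0 \<le> \<Phi> x"
    proof (cases "\<Phi> x \<le> \<Phi> 0")
      case False
      have "\<Phi> x0 \<le> \<Phi> 0" using x0(2)[of 0] by simp
      then show ?thesis using False by linarith
    qed (use x0 in auto)
  qed
qed

lemma sublevel_bounded:
  fixes \<Phi> :: "'a::euclidean_space \<Rightarrow> real"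
  assumes cs: "\<forall>c. compact {x. \<Phi> x \<le> c}"
  shows "\<exists>R\<ge>0. \<forall>x. \<Phi> x \<le> c \<longrightarrow> norm x \<le> R"
proof -
  obtain B where "\<forall>x\<in>{x. \<Phi> x \<le> c}. norm x \<le> B"
    using cs compact_imp_bounded bounded_iff by metis
  then show ?thesis by (intro exI[of _ "max B 0"]) (auto intro: le_max_iff_disj[THEN iffD2])
qed

theorem mainTheorem10:
  fixes \<Phi> :: "real^'n \<Rightarrow> real" and t K :: real
  assumes "C2 \<Phi>"
    and "\<forall>c. compact {x. \<Phi> x \<le> c}"
    and "t > 0" and "K > 0"
  shows "\<exists>\<alpha> \<delta>X \<delta>V. \<alpha> > 0 \<and> \<delta>X > 0 \<and> \<delta>V > 0 \<and>
    (\<forall>(f0 :: 'n state measure) f.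
       prob_space f0 \<longrightarrow> sets f0 = sets borel \<longrightarrow>
       emeasure f0 (UNIV - (ball 0 K \<times> ball 0 K)) = 0 \<longrightarrow>
       kinetic_solution \<Phi> f0 f \<longrightarrow>
       (\<forall>A\<in>sets borel. measure (f t) A \<ge> \<alpha> * measure lborel (A \<inter> (ball 0 \<delta>X \<times> ball 0 \<delta>V))))"
proof -
  obtain G H where PhiD: "\<And>x. (\<Phi> has_derivative (\<lambda>h. G x \<bullet> h)) (at x)"
    and GD: "\<And>x. (G has_derivative blinfun_apply (H x)) (at x)"
    and Hc: "continuous_on UNIV (H :: (real^'n) \<Rightarrow> ((real^'n) \<Rightarrow>\<^sub>L (real^'n)))"
    using assms(1) unfolding C2_def by blast
  have Phic: "continuous_on UNIV \<Phi>" by (rule cont_of_deriv[OF PhiD])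
  have Gc: "continuous_on UNIV G" by (rule cont_of_deriv[OF GD])
  obtain m0 where m0: "\<And>x. m0 \<le> \<Phi> x" using Phi_lower[OF Phic assms(2)] by blast
  have PMex: "\<And>r. \<exists>M. \<forall>x. norm x \<le> r \<longrightarrow> \<Phi> x \<le> M" by (rule bdd_above_on_ball[OF Phic])
  have GLex: "\<And>r. \<exists>L\<ge>0. \<forall>x y. norm x \<le> r \<longrightarrow> norm y \<le> r \<longrightarrow> norm (G x - G y) \<le> L * norm (x - y)"
    by (rule lip_on_ball[OF GD Hc])
  obtain PMK where PMK: "\<And>x. norm x \<le> K \<Longrightarrow> \<Phi> x \<le> PMK" using PMex by blast
  obtain R0 where R0: "0 \<le> R0" "\<And>x. \<Phi> x \<le> K^2/2 + PMK \<Longrightarrow> norm x \<le> R0"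
    using sublevel_bounded[OF assms(2), of "K^2/2 + PMK"] by blast
  obtain PM0 where PM0: "\<And>x. norm x \<le> R0 \<Longrightarrow> \<Phi> x \<le> PM0" using PMex by blast
  obtain Gm where Gm: "0 \<le> Gm" "\<And>x. norm x \<le> 3*R0+4 \<Longrightarrow> norm (G x) \<le> Gm"
    using norm_bdd_on_ball[OF Gc, of "3*R0+4"] by blast
  obtain L where L: "0 \<le> L" "\<And>x y. norm x \<le> 3*R0+4 \<Longrightarrow> norm y \<le> 3*R0+4 \<Longrightarrow> norm (G x - G y) \<le> L * norm (x - y)"
    using GLex by blast
  obtain PM1 where PM1: "\<And>x. norm x \<le> 1 \<Longrightarrow> \<Phi> x \<le> PM1" using PMex by blast
  have D0: "0 \<le> PM0 - m0" using m0[of 0] PM0[of 0] R0 by simp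
  have D1: "0 \<le> PM1 - m0" using m0[of 0] PM1[of 0] by simp
  define \<tau>0 where "\<tau>0 = min (t/2) (min (1/(Gm+1)) (1/(sqrt (2*(PM0 - m0))+1)))"
  have \<tau>0: "0 < \<tau>0" "\<tau>0 \<le> t/2" "\<tau>0^2 * Gm \<le> 1" "\<tau>0 * sqrt (2*(PM0 - m0)) \<le> 1"
  proof -
    define q where "q = sqrt (2*(PM0 - m0))"
    have q0: "0 \<le> q" using D0 by (simp add: q_def)
    have "\<tau>0 = min (t/2) (min (1/(Gm+1)) (1/(q+1)))" by (simp add: \<tau>0_def q_def)
    then show t0: "0 < \<tau>0" using assms(3) Gm q0 by simp
    show "\<tau>0 \<le> t/2" by (simp add: \<tau>0_def)
    have a: "\<tau>0 \<le> 1/(Gm+1)" by (simp add: \<tau>0_def)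
    have b: "\<tau>0 \<le> 1/(q+1)" by (simp add: \<tau>0_def q_def)
    have "1/(Gm+1) \<le> 1" using Gm by simp
    then have t1: "\<tau>0 \<le> 1" using a by linarith
    have "\<tau>0^2 \<le> \<tau>0" using t0 t1 by (simp add: power2_eq_square mult_left_le)
    then have "\<tau>0^2 \<le> 1/(Gm+1)" using a by linarith
    then have "\<tau>0^2 * Gm \<le> 1/(Gm+1) * Gm" using Gm(1) by (rule mult_right_mono)
    also have "\<dots> \<le> 1" using Gm by (simp add: field_simps)
    finally show "\<tau>0^2 * Gm \<le> 1" .
    have "\<tau>0 * q \<le> 1/(q+1) * q" using b q0 by (rule mult_right_mono)
    also have "\<dots> \<le> 1" using q0 by (simp add: field_simps)
    finally show "\<tau>0 * sqrt (2*(PM0 - m0)) \<le> 1" by (simp add: q_def)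
  qed
  define V2 where "V2 = sqrt (1 + 2*(PM1 - m0))"
  have V20: "0 \<le> V2" using D1 by (simp add: V2_def)
  define \<tau>1 where "\<tau>1 = min (t/2) (1/(2*(V2+Gm+1)))"
  have \<tau>1: "0 < \<tau>1" "\<tau>1 \<le> t/2" "\<tau>1 * V2 \<le> 1" "\<tau>1 * (V2 + Gm) \<le> 1/2"
  proof -
    show t0: "0 < \<tau>1" using assms(3) Gm V20 by (simp add: \<tau>1_def)
    show "\<tau>1 \<le> t/2" by (simp add: \<tau>1_def)
    have a: "\<tau>1 \<le> 1/(2*(V2+Gm+1))" by (simp add: \<tau>1_def)
    have "\<tau>1 * (V2 + Gm) \<le> 1/(2*(V2+Gm+1)) * (V2 + Gm)" using a V20 Gm by (intro mult_right_mono) auto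
    also have "\<dots> \<le> 1/2" using V20 Gm by (simp add: field_simps)
    finally show h: "\<tau>1 * (V2 + Gm) \<le> 1/2" .
    have "\<tau>1 * V2 \<le> \<tau>1 * (V2 + Gm)" using t0 Gm by simp
    then show "\<tau>1 * V2 \<le> 1" using h by linarith
  qed
  define Wb where "Wb = 2*(R0+1)/\<tau>0 + \<tau>0*Gm"
  have Wb0: "0 < Wb" using \<tau>0 R0 Gm by (simp add: Wb_def add_pos_nonneg)
  define mW where "mW = (2 * pi) powr (- real CARD('n) / 2) * exp (- (Wb^2) / 2)"
  define B1 where "B1 = exp ((1 + L) * \<tau>0)"
  define C1 where "C1 = (2 * B1 * real DIM(real^'n)) ^ DIM(real^'n)"
  define c2 where "c2 = mW / C1"
  define c3 where "c3 = (\<tau>0/2) * exp (-\<tau>0) * exp (-t) * c2"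
  define m1 where "m1 = (2 * pi) powr (- real CARD('n) / 2) * exp (- (1^2) / 2)"
  define B2 where "B2 = exp ((1 + L) * \<tau>1)"
  define C2 where "C2 = (2 * B2 * real DIM('n state)) ^ DIM('n state)"
  define \<alpha> where "\<alpha> = (\<tau>1/2) * exp (-\<tau>1) * (c3 * m1 / C2)"
  have pos: "0 < mW" "0 < B1" "0 < C1" "0 < c2" "0 < c3" "0 < m1" "0 < B2" "0 < C2" "0 < \<alpha>"
    using \<tau>0 \<tau>1 by (simp_all add: mW_def B1_def C1_def c2_def c3_def m1_def B2_def C2_def \<alpha>_def)
  have main: "\<forall>(f0 :: 'n state measure) f.
       prob_space f0 \<longrightarrow> sets f0 = sets borel \<longrightarrow>
       emeasure f0 (UNIV - (ball 0 K \<times> ball 0 K)) = 0 \<longrightarrow>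
       kinetic_solution \<Phi> f0 f \<longrightarrow>
       (\<forall>A\<in>sets borel. measure (f t) A \<ge> \<alpha> * measure lborel (A \<inter> (ball 0 (1/4) \<times> ball 0 (1/4))))"
  proof (intro allI impI ballI)
    fix f0 :: "'n state measure" and f :: "real \<Rightarrow> 'n state measure" and A :: "'n state set"
    assume f0p: "prob_space f0" and f0s: "sets f0 = sets borel"
      and f0K: "emeasure f0 (UNIV - (ball 0 K \<times> ball 0 K)) = 0"
      and ks: "kinetic_solution \<Phi> f0 f" and A: "A \<in> sets borel"
    obtain F where hfF: "ham_flow \<Phi> F"
      and fp: "\<And>s. 0 \<le> s \<Longrightarrow> prob_space (f s) \<and> sets (f s) = sets borel"
      and duh: "\<And>s B. 0 \<le> s \<Longrightarrow> B \<in> sets borel \<Longrightarrow>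
          set_integrable lborel {0..s}
            (\<lambda>r. exp (-(s - r)) * measure (distr (distr (f r) borel fst \<Otimes>\<^sub>M maxwellian) borel (F (s - r))) B)
        \<and> measure (f s) B = exp (-s) * measure (distr f0 borel (F s)) B
            + (\<integral>r\<in>{0..s}. exp (-(s - r)) *
                 measure (distr (distr (f r) borel fst \<Otimes>\<^sub>M maxwellian) borel (F (s - r))) B \<partial>lborel)"
      using ks unfolding kinetic_solution_def by blast
    have gradG: "\<And>x. grad \<Phi> x = G x" by (rule grad_eqI[OF PhiD])
    interpret hf: hflow \<Phi> G F
      using hfF PhiD unfolding ham_flow_def hflow_def by (simp add: gradG)
    have Fcont: "\<And>\<tau>. 0 \<le> \<tau> \<Longrightarrow> continuous_on UNIV (F \<tau>)" using hf.flow_cont[OF m0 PMex GLex] .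
    have Fmeas: "\<And>\<tau>. 0 \<le> \<tau> \<Longrightarrow> F \<tau> \<in> borel_measurable borel" using hf.flow_meas[OF m0 PMex GLex] .
    define \<rho> where "\<rho> = (\<lambda>s. distr (f s) borel fst :: (real^'n) measure)"
    define P where "P = (\<lambda>s. \<rho> s \<Otimes>\<^sub>M (maxwellian :: (real^'n) measure))"
    interpret MW: sigma_finite_measure "maxwellian :: (real^'n) measure" by (rule sigma_finite_maxwellian)
    have fs: "\<And>s. 0 \<le> s \<Longrightarrow> sets (f s) = sets borel" using fp by blast
    have fsp: "\<And>s. 0 \<le> s \<Longrightarrow> space (f s) = UNIV"
      using sets_eq_imp_space_eq[OF fs] by simp
    have fstm: "\<And>s. 0 \<le> s \<Longrightarrow> fst \<in> measurable (f s) (borel :: (real^'n) measure)"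
    proof -
      fix s :: real assume "0 \<le> s"
      have "fst \<in> measurable (borel :: 'n state measure) (borel :: (real^'n) measure)"
        by (intro borel_measurable_continuous_onI continuous_intros)
      then show "fst \<in> measurable (f s) (borel :: (real^'n) measure)"
        using measurable_cong_sets[OF fs[OF \<open>0 \<le> s\<close>] refl, of "borel :: (real^'n) measure"] by simp
    qed
    have \<rho>p: "\<And>s. 0 \<le> s \<Longrightarrow> prob_space (\<rho> s)"
      unfolding \<rho>_def using fp fstm by (simp add: prob_space.prob_space_distr)
    have \<rho>s: "\<And>s. sets (\<rho> s) = sets borel" by (simp add: \<rho>_def)
    have \<rho>sp: "\<And>s. space (\<rho> s) = UNIV" by (simp add: \<rho>_def)
    have Ps: "\<And>s. sets (P s) = sets borel"
    proof -
      fix s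
      have "sets (P s) = sets ((borel :: (real^'n) measure) \<Otimes>\<^sub>M (borel::(real^'n) measure))"
        unfolding P_def by (rule sets_pair_measure_cong[OF \<rho>s sets_maxwellian])
      then show "sets (P s) = sets borel" by (simp only: borel_prod)
    qed
    have Psp: "\<And>s. space (P s) = UNIV" using sets_eq_imp_space_eq[OF Ps] by simp
    have \<rho>meas: "\<And>s B. 0 \<le> s \<Longrightarrow> B \<in> sets borel \<Longrightarrow> measure (\<rho> s) B = measure (f s) (B \<times> UNIV)"
    proof -
      fix s :: real and B :: "(real^'n) set" assume "0 \<le> s" "B \<in> sets borel"
      then show "measure (\<rho> s) B = measure (f s) (B \<times> UNIV)"
        unfolding \<rho>_def using fstm fsp by (subst measure_distr) (auto simp: vimage_fst)
    qed
    have Palt: "\<And>s X. X \<in> sets borel \<Longrightarrow> emeasure (P s) X = (\<integral>\<^sup>+ y. emeasure maxwellian (Pair y -` X) \<partial>\<rho> s)"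
    proof -
      fix s and X :: "'n state set" assume "X \<in> sets borel"
      then have "X \<in> sets (\<rho> s \<Otimes>\<^sub>M maxwellian)" using Ps[of s] unfolding P_def by (simp only:)
      then show "emeasure (P s) X = (\<integral>\<^sup>+ y. emeasure maxwellian (Pair y -` X) \<partial>\<rho> s)"
        unfolding P_def by (rule MW.emeasure_pair_measure_alt)
    qed
    have Ptot: "\<And>s. 0 \<le> s \<Longrightarrow> emeasure (P s) UNIV = emeasure (maxwellian :: (real^'n) measure) UNIV"
    proof -
      fix s :: real assume s: "0 \<le> s"
      have "emeasure (P s) UNIV = (\<integral>\<^sup>+ y. emeasure (maxwellian :: (real^'n) measure) UNIV \<partial>\<rho> s)"
        by (simp add: Palt)
      also have "\<dots> = emeasure (maxwellian :: (real^'n) measure) UNIV"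
        using prob_space.emeasure_space_1[OF \<rho>p[OF s]] by (simp add: \<rho>sp)
      finally show "emeasure (P s) UNIV = emeasure (maxwellian :: (real^'n) measure) UNIV" .
    qed
    have duhP: "\<And>s B. 0 \<le> s \<Longrightarrow> B \<in> sets borel \<Longrightarrow>
          set_integrable lborel {0..s} (\<lambda>r. exp (-(s - r)) * measure (distr (P r) borel (F (s - r))) B)
        \<and> measure (f s) B = exp (-s) * measure (distr f0 borel (F s)) B
            + (\<integral>r\<in>{0..s}. exp (-(s - r)) * measure (distr (P r) borel (F (s - r))) B \<partial>lborel)"
      using duh by (simp add: P_def \<rho>_def)
    have Pdistr: "\<And>s \<tau> X. 0 \<le> \<tau> \<Longrightarrow> X \<in> sets borel \<Longrightarrow> measure (distr (P s) borel (F \<tau>)) X = measure (P s) (F \<tau> -` X)"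
    proof -
      fix s \<tau> :: real and X :: "'n state set" assume "0 \<le> \<tau>" "X \<in> sets borel"
      moreover have "F \<tau> \<in> measurable (P s) borel" 
        using Fmeas[OF \<open>0 \<le> \<tau>\<close>] measurable_cong_sets[OF Ps[of s] refl, of "borel :: 'n state measure"] by simp
      ultimately show "measure (distr (P s) borel (F \<tau>)) X = measure (P s) (F \<tau> -` X)"
        by (simp add: measure_distr Psp)
    qed
    have f0sp: "space f0 = UNIV" using sets_eq_imp_space_eq[OF f0s] by simp
    have Ff0: "\<And>\<tau>. 0 \<le> \<tau> \<Longrightarrow> F \<tau> \<in> measurable f0 borel"
      using Fmeas measurable_cong_sets[OF f0s refl, of "borel :: 'n state measure"] by simp
    have MWfin: "emeasure (maxwellian :: (real^'n) measure) UNIV < \<infinity>"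
    proof (rule ccontr)
      assume "\<not> emeasure (maxwellian :: (real^'n) measure) UNIV < \<infinity>"
      then have inf: "emeasure (maxwellian :: (real^'n) measure) UNIV = \<infinity>" by (simp add: less_top[symmetric])
      have z: "measure (distr (P s) borel (F (t - s))) UNIV = 0" if "s \<in> {0..t}" for s
      proof -
        have "measure (distr (P s) borel (F (t - s))) UNIV = measure (P s) UNIV"
          using Pdistr[of "t - s" UNIV s] that by simp
        also have "\<dots> = 0" using Ptot[of s] inf that by (simp add: measure_def)
        finally show ?thesis .
      qed
      have t0: "0 \<le> t" using assms(3) by simp
      have I0: "(\<integral>s\<in>{0..t}. exp (-(t - s)) * measure (distr (P s) borel (F (t - s))) UNIV \<partial>lborel) = (\<integral>s\<in>{0..t}. 0 \<partial>lborel)"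
        by (rule set_lebesgue_integral_cong) (auto simp: z)
      have pft: "prob_space (f t)" using fp[OF t0] by blast
      have m1: "measure (f t) UNIV = 1"
        using prob_space.prob_space[OF pft] unfolding fsp[OF t0] .
      have m2: "measure (distr f0 borel (F t)) UNIV = 1"
      proof -
        have "measure (distr f0 borel (F t)) UNIV = measure f0 (F t -` UNIV \<inter> space f0)"
          by (rule measure_distr[OF Ff0[OF t0]]) simp
        also have "\<dots> = measure f0 (space f0)" by simp
        also have "\<dots> = 1" by (rule prob_space.prob_space[OF f0p])
        finally show ?thesis .
      qed
      have "measure (f t) UNIV = exp (-t) * measure (distr f0 borel (F t)) UNIV
          + (\<integral>s\<in>{0..t}. exp (-(t - s)) * measure (distr (P s) borel (F (t - s))) UNIV \<partial>lborel)"
        using duhP[OF t0, of UNIV] by simp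
      also have "(\<integral>s\<in>{0..t}. exp (-(t - s)) * measure (distr (P s) borel (F (t - s))) UNIV \<partial>lborel) = 0"
        unfolding I0 by (simp add: set_lebesgue_integral_def)
      finally have "measure (f t) UNIV = exp (-t) * measure (distr f0 borel (F t)) UNIV" by simp
      then have "1 = exp (-t)" using m1 m2 by simp
      moreover have "exp (-t) < 1" using assms(3) by simp
      ultimately show False by simp
    qed
    have Pfin: "\<And>s X. 0 \<le> s \<Longrightarrow> emeasure (P s) X < \<infinity>"
    proof -
      fix s :: real and X assume s: "0 \<le> s"
      have "emeasure (P s) X \<le> emeasure (P s) (space (P s))" by (rule emeasure_space)
      then show "emeasure (P s) X < \<infinity>" using Ptot[OF s] MWfin by (simp add: Psp)
    qed
    have duhlow1: "exp (-s) * measure (distr f0 borel (F s)) B \<le> measure (f s) B"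
      if "0 \<le> s" "B \<in> sets borel" for s B
    proof -
      have "0 \<le> (\<integral>r\<in>{0..s}. exp (-(s - r)) * measure (distr (P r) borel (F (s - r))) B \<partial>lborel)"
        by (rule set_integral_nonneg_simple) simp
      then show ?thesis using duhP[OF that] by linarith
    qed
    have duhlow2: "(\<integral>r\<in>{0..s}. exp (-(s - r)) * measure (distr (P r) borel (F (s - r))) B \<partial>lborel) \<le> measure (f s) B"
      if "0 \<le> s" "B \<in> sets borel" for s B
    proof -
      have "0 \<le> exp (-s) * measure (distr f0 borel (F s)) B" by simp
      then show ?thesis using duhP[OF that] by linarith
    qed
    have BB1: "measure f0 (ball 0 K \<times> ball 0 K) = 1"
    proof -
      have BBs: "ball (0::real^'n) K \<times> ball (0::real^'n) K \<in> sets f0"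
        unfolding f0s by (simp add: borel_open open_Times)
      have "measure f0 (space f0 - ball 0 K \<times> ball 0 K) = 1 - measure f0 (ball 0 K \<times> ball 0 K)"
        by (rule prob_space.prob_compl[OF f0p BBs])
      moreover have "measure f0 (space f0 - ball 0 K \<times> ball 0 K) = 0"
        using f0K f0sp by (simp add: measure_def)
      ultimately show ?thesis by simp
    qed
    have Q1: "\<And>r. 0 \<le> r \<Longrightarrow> exp (-r) \<le> measure (\<rho> r) (cball 0 R0)"
    proof -
      fix r :: real assume r: "0 \<le> r"
      define X where "X = cball (0::real^'n) R0 \<times> (UNIV :: (real^'n) set)"
      have Xb: "X \<in> sets borel" unfolding X_def by (simp add: borel_closed closed_Times)
      have sub: "ball 0 K \<times> ball 0 K \<subseteq> F r -` X \<inter> space f0"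
      proof
        fix z :: "'n state" assume "z \<in> ball 0 K \<times> ball 0 K"
        then have z: "norm (fst z) < K" "norm (snd z) < K" by (auto simp: mem_Times_iff)
        have "norm (snd z)^2 \<le> K^2" using z(2) by (simp add: power_mono)
        then have "\<Phi> (fst (F r z)) \<le> K^2/2 + PMK"
          using hf.pos_sublevel[OF m0, of r z] PMK[of "fst z"] z(1) by (smt (verit) field_sum_of_halves)
        then have "norm (fst (F r z)) \<le> R0" by (rule R0(2))
        then show "z \<in> F r -` X \<inter> space f0" by (simp add: X_def f0sp mem_Times_iff)
      qed
      have "exp (-r) = exp (-r) * measure f0 (ball 0 K \<times> ball 0 K)" by (simp add: BB1)
      also have "\<dots> \<le> exp (-r) * measure f0 (F r -` X \<inter> space f0)"
      proof (rule mult_left_mono)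
        show "measure f0 (ball 0 K \<times> ball 0 K) \<le> measure f0 (F r -` X \<inter> space f0)"
          by (rule finite_measure.finite_measure_mono[OF prob_space.axioms(1)[OF f0p] sub])
             (rule measurable_sets[OF Ff0[OF r] Xb])
      qed simp
      also have "\<dots> = exp (-r) * measure (distr f0 borel (F r)) X"
        by (simp add: measure_distr[OF Ff0[OF r] Xb])
      also have "\<dots> \<le> measure (f r) X" by (rule duhlow1[OF r Xb])
      also have "\<dots> = measure (\<rho> r) (cball 0 R0)" by (simp add: \<rho>meas[OF r] X_def)
      finally show "exp (-r) \<le> measure (\<rho> r) (cball 0 R0)" .
    qed
    have Kpt: "ennreal (c2 * measure lborel B) \<le> emeasure maxwellian (Pair y -` (F \<tau> -` (B \<times> UNIV)))"
      if B: "B \<in> sets borel" "B \<subseteq> cball 0 1" and y: "norm y \<le> R0" and \<tau>: "\<tau>0/2 \<le> \<tau>" "\<tau> \<le> \<tau>0"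
      for B :: "(real^'n) set" and y \<tau>
    proof -
      have \<tau>pos: "0 \<le> \<tau>" using \<tau> \<tau>0 by linarith
      define X where "X = (\<lambda>w::real^'n. fst (F \<tau> (y, w)))"
      have Xc: "continuous_on UNIV X"
        unfolding X_def by (intro continuous_on_compose2[OF Fcont[OF \<tau>pos]] continuous_intros) auto
      have Xm: "X \<in> borel_measurable borel" by (rule borel_measurable_continuous_onI[OF Xc])
      define S0 where "S0 = {w. X w \<in> B}"
      have S0eq: "Pair y -` (F \<tau> -` (B \<times> UNIV)) = S0" by (auto simp: S0_def X_def mem_Times_iff)
      have S0b: "S0 \<in> sets borel"
        using measurable_sets[OF Xm B(1)] by (simp add: S0_def vimage_def)
      define S where "S = S0 \<inter> cball 0 Wb"
      have Sb: "S \<in> sets borel" using S0b by (simp add: S_def borel_closed)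
      have Sbd: "bounded S" by (simp add: S_def bounded_Int)
      note ms = hf.mid_step[OF m0 PM0 R0(1) Gm(2) Gm(1) L(1) L(2) \<tau>0(1) \<tau>0(3) \<tau>0(4) \<tau> y Fcont[OF \<tau>pos]]
      have surj: "B \<subseteq> X ` S"
      proof
        fix x assume "x \<in> B"
        then have "norm x \<le> 1" using B(2) by auto
        then obtain w where "norm w \<le> Wb" "fst (F \<tau> (y,w)) = x" using ms(1) unfolding Wb_def by blast
        then show "x \<in> X ` S" using \<open>x \<in> B\<close> by (auto simp: X_def S_def S0_def image_iff)
      qed
      have lips: "norm (X b - X a) \<le> B1 * norm (b - a)" if "a \<in> S" "b \<in> S" for a b
        using ms(2)[of b a] that by (simp add: X_def S_def B1_def Wb_def)
      have "measure lebesgue B \<le> C1 * measure lebesgue S"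
        unfolding C1_def by (rule Lipschitz_image_measure[OF pos(2) Sbd _ _ surj lips]) (use Sb B in auto)
      then have LB: "measure lborel B \<le> C1 * measure lborel S"
        using Sb B by simp
      have "ennreal mW * emeasure lborel (S0 \<inter> cball 0 Wb) \<le> emeasure maxwellian S0"
        unfolding mW_def by (rule maxwellian_lower[OF S0b]) (use Wb0 in simp)
      moreover have "emeasure lborel (S0 \<inter> cball 0 Wb) = ennreal (measure lborel S)"
        unfolding S_def[symmetric] using emeasure_bounded_finite[OF Sbd] by (simp add: emeasure_eq_ennreal_measure)
      moreover have "c2 * measure lborel B \<le> mW * measure lborel S"
      proof -
        have "c2 * measure lborel B = mW * (measure lborel B / C1)" by (simp add: c2_def)
        also have "\<dots> \<le> mW * measure lborel S"
          using LB pos by (intro mult_left_mono) (auto simp: field_simps)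
        finally show ?thesis .
      qed
      ultimately show ?thesis
        using pos by (simp add: S0eq ennreal_mult[symmetric] order_trans[OF ennreal_leI])
    qed
    have Kmid: "c2 * exp (-t) * measure lborel B \<le> measure (distr (P r) borel (F \<tau>)) (B \<times> UNIV)"
      if B: "B \<in> sets borel" "B \<subseteq> cball 0 1" and r: "0 \<le> r" "r \<le> t" and \<tau>: "\<tau>0/2 \<le> \<tau>" "\<tau> \<le> \<tau>0"
      for B :: "(real^'n) set" and r \<tau>
    proof -
      have \<tau>pos: "0 \<le> \<tau>" using \<tau> \<tau>0 by linarith
      have Xb: "B \<times> (UNIV :: (real^'n) set) \<in> sets borel"
      proof -
        have "fst \<in> measurable (borel :: 'n state measure) (borel :: (real^'n) measure)"
          by (intro borel_measurable_continuous_onI continuous_intros)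
        from measurable_sets[OF this B(1)] show ?thesis by (simp add: vimage_fst)
      qed
      define E where "E = F \<tau> -` (B \<times> (UNIV :: (real^'n) set))"
      have Eb: "E \<in> sets borel"
        using measurable_sets[OF Fmeas[OF \<tau>pos] Xb] by (simp add: E_def)
      have cb: "cball (0::real^'n) R0 \<in> sets (\<rho> r)" by (simp add: \<rho>s borel_closed)
      have "ennreal (c2 * measure lborel B) * ennreal (exp (-t)) \<le> ennreal (c2 * measure lborel B) * emeasure (\<rho> r) (cball 0 R0)"
      proof (rule mult_left_mono)
        have "exp (-t) \<le> exp (-r)" using r by simp
        also have "\<dots> \<le> measure (\<rho> r) (cball 0 R0)" by (rule Q1[OF r(1)])
        finally have "ennreal (exp (-t)) \<le> ennreal (measure (\<rho> r) (cball 0 R0))" by (rule ennreal_leI)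
        also have "\<dots> = emeasure (\<rho> r) (cball 0 R0)"
          using finite_measure.emeasure_eq_measure[OF prob_space.axioms(1)[OF \<rho>p[OF r(1)]]] by simp
        finally show "ennreal (exp (-t)) \<le> emeasure (\<rho> r) (cball 0 R0)" .
      qed simp
      also have "\<dots> = (\<integral>\<^sup>+ y. ennreal (c2 * measure lborel B) * indicator (cball 0 R0) y \<partial>\<rho> r)"
        by (rule nn_integral_cmult_indicator[OF cb, symmetric])
      also have "\<dots> \<le> (\<integral>\<^sup>+ y. emeasure maxwellian (Pair y -` E) \<partial>\<rho> r)"
      proof (rule nn_integral_mono)
        fix y :: "real^'n"
        show "ennreal (c2 * measure lborel B) * indicator (cball 0 R0) y \<le> emeasure maxwellian (Pair y -` E)"
        proof (cases "norm y \<le> R0")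
          case True
          then show ?thesis using Kpt[OF B True \<tau>] by (simp add: E_def indicator_def)
        qed (simp add: indicator_def)
      qed
      also have "\<dots> = emeasure (P r) E" by (rule Palt[OF Eb, symmetric])
      finally have "ennreal (c2 * exp (-t) * measure lborel B) \<le> emeasure (P r) E"
        using pos by (simp add: ennreal_mult[symmetric] mult_ac)
      then have "c2 * exp (-t) * measure lborel B \<le> measure (P r) E"
        by (rule measure_geI) (use Pfin[OF r(1)] pos in auto)
      then show ?thesis using Pdistr[OF \<tau>pos Xb, of r] by (simp add: E_def)
    qed
    have Q2: "\<And>s B. s \<in> {\<tau>0..t} \<Longrightarrow> B \<in> sets borel \<Longrightarrow> B \<subseteq> cball 0 1 \<Longrightarrow> c3 * measure lborel B \<le> measure (\<rho> s) B"
    proof -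
      fix s and B :: "(real^'n) set"
      assume s: "s \<in> {\<tau>0..t}" and B: "B \<in> sets borel" "B \<subseteq> cball 0 1"
      have s0: "0 \<le> s" using s \<tau>0 by auto
      have Xb: "B \<times> (UNIV :: (real^'n) set) \<in> sets borel"
      proof -
        have "fst \<in> measurable (borel :: 'n state measure) (borel :: (real^'n) measure)"
          by (intro borel_measurable_continuous_onI continuous_intros)
        from measurable_sets[OF this B(1)] show ?thesis by (simp add: vimage_fst)
      qed
      define c where "c = exp (-\<tau>0) * (c2 * exp (-t) * measure lborel B)"
      have "c * ((s - \<tau>0/2) - (s - \<tau>0)) \<le> (\<integral>r\<in>{0..s}. exp (-(s - r)) * measure (distr (P r) borel (F (s - r))) (B \<times> UNIV) \<partial>lborel)"
      proof (rule set_integral_lower)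
        show "set_integrable lborel {0..s} (\<lambda>r. exp (-(s - r)) * measure (distr (P r) borel (F (s - r))) (B \<times> UNIV))"
          using duhP[OF s0 Xb] by blast
        fix r assume r: "r \<in> {s - \<tau>0 .. s - \<tau>0/2}"
        have r0: "0 \<le> r" "r \<le> t" using r s \<tau>0 by auto
        have k: "c2 * exp (-t) * measure lborel B \<le> measure (distr (P r) borel (F (s - r))) (B \<times> UNIV)"
          by (rule Kmid[OF B r0]) (use r in auto)
        have e: "exp (-\<tau>0) \<le> exp (-(s - r))" using r by simp
        show "c \<le> exp (-(s - r)) * measure (distr (P r) borel (F (s - r))) (B \<times> UNIV)"
          unfolding c_def by (rule mult_mono[OF e k]) (use pos in auto)
      qed (use s \<tau>0 pos in \<open>auto simp: c_def\<close>)
      also have "\<dots> \<le> measure (f s) (B \<times> UNIV)" by (rule duhlow2[OF s0 Xb])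
      also have "\<dots> = measure (\<rho> s) B" by (rule \<rho>meas[OF s0 B(1), symmetric])
      finally show "c3 * measure lborel B \<le> measure (\<rho> s) B"
        by (simp add: c_def c3_def field_simps)
    qed
    define D1 where "D1 = density lborel (\<lambda>x::real^'n. ennreal c3 * indicator (cball 0 1) x)"
    define D2 where "D2 = density lborel (\<lambda>x::real^'n. ennreal m1 * indicator (cball 0 1) x)"
    have cb1: "cball (0::real^'n) 1 \<in> sets borel" by (simp add: borel_closed)
    have Q3: "\<And>s. s \<in> {\<tau>0..t} \<Longrightarrow> D1 \<le> \<rho> s"
    proof -
      fix s assume s: "s \<in> {\<tau>0..t}"
      have s0: "0 \<le> s" using s \<tau>0 by auto
      show "D1 \<le> \<rho> s"
      proof (rule le_measureI_sets)
        show "sets D1 = sets (\<rho> s)" by (simp add: D1_def \<rho>s)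
        fix A' assume "A' \<in> sets D1"
        then have A': "A' \<in> sets borel" by (simp add: D1_def)
        have Ab: "A' \<inter> cball 0 1 \<in> sets borel" using A' cb1 by simp
        have "emeasure D1 A' = ennreal c3 * emeasure lborel (A' \<inter> cball 0 1)"
          unfolding D1_def by (rule emeasure_density_const_ind[OF cb1 A'])
        also have "\<dots> = ennreal (c3 * measure lborel (A' \<inter> cball 0 1))"
          using emeasure_bounded_finite[of "A' \<inter> cball 0 1"] pos
          by (simp add: emeasure_eq_ennreal_measure ennreal_mult bounded_Int)
        also have "\<dots> \<le> ennreal (measure (\<rho> s) (A' \<inter> cball 0 1))"
          by (rule ennreal_leI, rule Q2[OF s Ab]) auto
        also have "\<dots> = emeasure (\<rho> s) (A' \<inter> cball 0 1)"
          using finite_measure.emeasure_eq_measure[OF prob_space.axioms(1)[OF \<rho>p[OF s0]]] by simp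
        also have "\<dots> \<le> emeasure (\<rho> s) A'"
          by (rule emeasure_mono) (use A' in \<open>auto simp: \<rho>s\<close>)
        finally show "emeasure D1 A' \<le> emeasure (\<rho> s) A'" .
      qed
    qed
    have Q4: "D2 \<le> maxwellian"
    proof (rule le_measureI_sets)
      show "sets D2 = sets maxwellian" by (simp add: D2_def)
      fix A' assume "A' \<in> sets D2"
      then have A': "A' \<in> sets borel" by (simp add: D2_def)
      have "emeasure D2 A' = ennreal m1 * emeasure lborel (A' \<inter> cball 0 1)"
        unfolding D2_def by (rule emeasure_density_const_ind[OF cb1 A'])
      also have "\<dots> \<le> emeasure maxwellian A'"
        unfolding m1_def by (rule maxwellian_lower[OF A']) simp
      finally show "emeasure D2 A' \<le> emeasure maxwellian A'" .
    qed
    have sfD2: "sigma_finite_measure D2"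
      unfolding D2_def by (subst sigma_finite_measure.sigma_finite_iff_density_finite[OF sigma_finite_lborel]) (auto simp: indicator_def)
    have Gm2: "\<And>x. norm x \<le> 2 \<Longrightarrow> norm (G x) \<le> Gm" using Gm(2) R0(1) by simp
    have L2: "\<And>x y. norm x \<le> 2 \<Longrightarrow> norm y \<le> 2 \<Longrightarrow> norm (G x - G y) \<le> L * norm (x - y)" using L(2) R0(1) by simp
    have \<tau>1c: "0 \<le> \<tau>1" "\<tau>1 * sqrt (1 + 2 * (PM1 - m0)) \<le> 1" "\<tau>1 * (sqrt (1 + 2 * (PM1 - m0)) + Gm) \<le> 1/2"
      using \<tau>1 by (auto simp: V2_def)
    define A' where "A' = A \<inter> (ball (0::real^'n) (1/4) \<times> ball (0::real^'n) (1/4))"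
    have A'b: "A' \<in> sets borel" unfolding A'_def using A by (simp add: borel_open open_Times)
    have t0: "0 \<le> t" using assms(3) by simp
    have Kfin: "c3 * m1 * (measure lborel A' / C2) \<le> measure (distr (P s) borel (F (t - s))) A"
      if s: "s \<in> {t - \<tau>1 .. t - \<tau>1/2}" for s
    proof -
      define \<tau> where "\<tau> = t - s"
      have \<tau>: "\<tau>1/2 \<le> \<tau>" "\<tau> \<le> \<tau>1" "0 < \<tau>" using s \<tau>1 by (auto simp: \<tau>_def)
      have sQ: "s \<in> {\<tau>0..t}" using s \<tau>0 \<tau>1 by auto
      have s0: "0 \<le> s" using sQ \<tau>0 by auto
      define E where "E = F \<tau> -` A"
      have Eb: "E \<in> sets borel"
        using measurable_sets[OF Fmeas[of \<tau>] A] \<tau> by (simp add: E_def)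
      define S where "S = cball 0 1 \<inter> E"
      have Sb: "S \<in> sets borel" using Eb by (simp add: S_def borel_closed)
      have Sbd: "bounded S" by (simp add: S_def bounded_Int)
      note fs = hf.final_step[OF m0 PM1 Gm2 Gm(1) L(1) L2 \<tau>1c \<tau>(3) \<tau>(2) Fcont[OF less_imp_le[OF \<tau>(3)]]]
      have surj: "A' \<subseteq> F \<tau> ` S"
      proof
        fix a assume a: "a \<in> A'"
        then have "norm (fst a) < 1/4" "norm (snd a) < 1/4" by (auto simp: A'_def mem_Times_iff)
        then have "norm a \<le> 1/2" using norm_Pair_le[of "fst a" "snd a"] by simp
        then obtain z where "norm z \<le> 1" "F \<tau> z = a" using fs(1)[of a] by blast
        then show "a \<in> F \<tau> ` S" using a by (auto simp: S_def E_def A'_def image_iff)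
      qed
      have lips: "norm (F \<tau> b - F \<tau> a) \<le> B2 * norm (b - a)" if "a \<in> S" "b \<in> S" for a b
        using fs(2)[of b a] that \<tau> by (simp add: S_def B2_def)
      have "measure lebesgue A' \<le> C2 * measure lebesgue S"
        unfolding C2_def by (rule Lipschitz_image_measure[OF pos(7) Sbd _ _ surj lips]) (use Sb A'b in auto)
      then have LA: "measure lborel A' \<le> C2 * measure lborel S"
        using Sb A'b by simp
      have Es: "E \<in> sets (\<rho> s \<Otimes>\<^sub>M maxwellian)" using Ps[of s] Eb unfolding P_def by (simp only:)
      have "ennreal (c3 * m1) * emeasure lborel (E \<inter> cball 0 1) \<le> emeasure (D1 \<Otimes>\<^sub>M D2) E"
        unfolding D1_def D2_def by (rule density_box_lower) (use pos Eb in auto)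
      also have "\<dots> \<le> emeasure (P s) E"
        unfolding P_def
        by (rule pair_measure_mono[OF _ Q3[OF sQ] _ Q4 sigma_finite_maxwellian sfD2 Es])
           (simp_all add: D1_def D2_def \<rho>s)
      finally have "ennreal (c3 * m1) * emeasure lborel (E \<inter> cball 0 1) \<le> emeasure (P s) E" .
      moreover have "emeasure lborel (E \<inter> cball 0 1) = ennreal (measure lborel S)"
        using emeasure_bounded_finite[OF Sbd] by (simp add: S_def Int_commute emeasure_eq_ennreal_measure)
      moreover have "c3 * m1 * (measure lborel A' / C2) \<le> c3 * m1 * measure lborel S"
        using LA pos by (intro mult_left_mono) (auto simp: field_simps)
      ultimately have "ennreal (c3 * m1 * (measure lborel A' / C2)) \<le> emeasure (P s) E"
        using pos by (simp add: ennreal_mult[symmetric] order_trans[OF ennreal_leI])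
      then have "c3 * m1 * (measure lborel A' / C2) \<le> measure (P s) E"
        by (rule measure_geI) (use Pfin[OF s0] pos in auto)
      then show ?thesis using Pdistr[of \<tau> A s] \<tau> A by (simp add: E_def \<tau>_def)
    qed
    define c where "c = exp (-\<tau>1) * (c3 * m1 * (measure lborel A' / C2))"
    have "c * ((t - \<tau>1/2) - (t - \<tau>1)) \<le> (\<integral>s\<in>{0..t}. exp (-(t - s)) * measure (distr (P s) borel (F (t - s))) A \<partial>lborel)"
    proof (rule set_integral_lower)
      show "set_integrable lborel {0..t} (\<lambda>s. exp (-(t - s)) * measure (distr (P s) borel (F (t - s))) A)"
        using duhP[OF t0 A] by blast
      fix s assume s: "s \<in> {t - \<tau>1 .. t - \<tau>1/2}"
      have e: "exp (-\<tau>1) \<le> exp (-(t - s))" using s by simp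
      show "c \<le> exp (-(t - s)) * measure (distr (P s) borel (F (t - s))) A"
        unfolding c_def by (rule mult_mono[OF e Kfin[OF s]]) (use pos in auto)
    qed (use \<tau>1 pos in \<open>auto simp: c_def\<close>)
    also have "\<dots> \<le> measure (f t) A" by (rule duhlow2[OF t0 A])
    finally show "\<alpha> * measure lborel (A \<inter> (ball 0 (1/4) \<times> ball 0 (1/4))) \<le> measure (f t) A"
      by (simp add: c_def \<alpha>_def A'_def field_simps)
  qed
  show ?thesis
    by (rule exI[of _ \<alpha>], rule exI[of _ "1/4"], rule exI[of _ "1/4"]) (use pos main in auto)
qed


end
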